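(* Let $\Omega\subset\mathbb{R}^n$ be a bounded domain with smooth boundary, $a=a(x)$ a smooth positive function and $\gamma=\gamma(x)$ a smooth real symmetric positive definite $n\times n$ matrix valued function on $\overline\Omega$. Let $\varphi$ be a smooth real function on $\overline\Omega$ satisfying the eikonal equation $\gamma\nabla\varphi\cdot\nabla\varphi=a$. Given $N\ge1$, let $a_0,\dots,a_N$ be smooth functions on $\overline\Omega$ satisfying $$2\gamma\nabla\varphi\cdot\nabla a_0+(\nabla\cdot\gamma\nabla\varphi)a_0=0,$$ $$2\gamma\nabla\varphi\cdot\nabla a_{j+1}+(\nabla\cdot\gamma\nabla\varphi)a_{j+1}=-\nabla\cdot\gamma\nabla a_j,\quad j=0,\dots,N-1.$$ For $\tau>0$ let $w$ be the unique solution of $$\nabla\cdot\gamma\nabla w-\tau a w=0\ \text{ in }\Omega,\qquad w=e^{\sqrt{\tau}\varphi}\sum_{j=0}^N\frac{a_j}{(\sqrt{\tau})^j}\ \text{ on }\partial\Omega.$$ Then, as $\tau\to\infty$, $$\Big\|e^{-\sqrt{\tau}\varphi}w-\sum_{j=0}^{N-1}\frac{a_j}{(\sqrt{\tau})^j}\Big\|_{H^1(\Omega)}=O\Big(\frac{1}{(\sqrt{\tau})^N}\Big).$$ *)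

theory Defs
  imports "HOL-Analysis.Analysis"
begin

definition pderiv_i :: "'n::finite \<Rightarrow> (real^'n \<Rightarrow> real) \<Rightarrow> real^'n \<Rightarrow> real" where
  "pderiv_i i f x = frechet_derivative f (at x) (axis i 1)"

fun Ck :: "nat \<Rightarrow> (real^'n::finite \<Rightarrow> real) \<Rightarrow> bool" where
  "Ck 0 f = continuous_on UNIV f"
| "Ck (Suc k) f = ((\<forall>x. f differentiable (at x)) \<and> (\<forall>i. Ck k (pderiv_i i f)))"

definition smooth_Rn :: "(real^'n::finite \<Rightarrow> real) \<Rightarrow> bool" where
  "smooth_Rn f = (\<forall>k. Ck k f)"

definition grad :: "(real^'n::finite \<Rightarrow> real) \<Rightarrow> real^'n \<Rightarrow> real^'n" where
  "grad f x = (\<chi> i. pderiv_i i f x)"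

definition divg :: "(real^'n::finite \<Rightarrow> real^'n) \<Rightarrow> real^'n \<Rightarrow> real" where
  "divg F x = (\<Sum>i\<in>UNIV. pderiv_i i (\<lambda>y. F y $ i) x)"

definition smooth_bounded_domain :: "(real^'n::finite) set \<Rightarrow> bool" where
  "smooth_bounded_domain \<Omega> =
     (open \<Omega> \<and> connected \<Omega> \<and> bounded \<Omega> \<and> \<Omega> \<noteq> {} \<and>
      (\<exists>\<rho>. smooth_Rn \<rho> \<and> \<Omega> = {x. \<rho> x < 0} \<and> frontier \<Omega> = {x. \<rho> x = 0} \<and>
           (\<forall>x\<in>frontier \<Omega>. grad \<rho> x \<noteq> 0)))"

definition smooth_matrix :: "(real^'n::finite \<Rightarrow> real^'n^'n) \<Rightarrow> bool" where
  "smooth_matrix G = (\<forall>i j. smooth_Rn (\<lambda>x. G x $ i $ j))"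

definition sym_pos_def :: "real^'n::finite^'n \<Rightarrow> bool" where
  "sym_pos_def A = (transpose A = A \<and> (\<forall>v. v \<noteq> 0 \<longrightarrow> (A *v v) \<bullet> v > 0))"

text \<open>H^1(\<Omega>) norm (for functions that are smooth on the closure).\<close>
definition H1_norm :: "(real^'n::finite) set \<Rightarrow> (real^'n \<Rightarrow> real) \<Rightarrow> real" where
  "H1_norm \<Omega> u = sqrt (integral \<Omega> (\<lambda>x. (u x)\<^sup>2 + (norm (grad u x))\<^sup>2))"

end

theory Submission
  imports Defs
begin

lemma pd_eq: "(f has_derivative f') (at x) \<Longrightarrow> pderiv_i i f x = f' (axis i 1)"
  unfolding pderiv_i_def using frechet_derivative_at by metis

lemma fd_works: "f differentiable (at x) \<Longrightarrow> (f has_derivative frechet_derivative f (at x)) (at x)"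
  using frechet_derivative_works by blast

lemma pd_add: "f differentiable (at x) \<Longrightarrow> g differentiable (at x) \<Longrightarrow>
  pderiv_i i (\<lambda>y. f y + g y) x = pderiv_i i f x + pderiv_i i g x"
  apply (rule pd_eq[THEN trans])
   apply (rule has_derivative_add[OF fd_works fd_works], assumption+)
  apply (simp add: pderiv_i_def)
  done

lemma pd_diff: "f differentiable (at x) \<Longrightarrow> g differentiable (at x) \<Longrightarrow>
  pderiv_i i (\<lambda>y. f y - g y) x = pderiv_i i f x - pderiv_i i g x"
  apply (rule pd_eq[THEN trans])
   apply (rule has_derivative_diff[OF fd_works fd_works], assumption+)
  apply (simp add: pderiv_i_def)
  done

lemma pd_mult: "f differentiable (at x) \<Longrightarrow> g differentiable (at x) \<Longrightarrow>
  pderiv_i i (\<lambda>y. f y * g y :: real) x = pderiv_i i f x * g x + f x * pderiv_i i g x"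
  apply (rule pd_eq[THEN trans])
   apply (rule has_derivative_mult[OF fd_works fd_works], assumption+)
  apply (simp add: pderiv_i_def)
  done

lemma pd_const: "pderiv_i i (\<lambda>y. c::real) x = 0"
  apply (rule pd_eq[THEN trans])
   apply (rule has_derivative_const)
  apply simp
  done

lemma pd_cmult: "f differentiable (at x) \<Longrightarrow>
  pderiv_i i (\<lambda>y. c * f y :: real) x = c * pderiv_i i f x"
  apply (rule pd_eq[THEN trans])
   apply (rule has_derivative_mult_right[OF fd_works], assumption)
  apply (simp add: pderiv_i_def)
  done

lemma pd_exp: "f differentiable (at x) \<Longrightarrow>
  pderiv_i i (\<lambda>y. exp (f y)) x = exp (f x) * pderiv_i i f x"
proof -
  assume d: "f differentiable (at x)"
  have "((\<lambda>y. exp (f y)) has_derivative (\<lambda>h. exp (f x) * frechet_derivative f (at x) h)) (at x)"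
  proof -
    have "(exp has_derivative (\<lambda>h. exp (f x) * h)) (at (f x))"
      using DERIV_exp[of "f x", unfolded has_field_derivative_def] by simp
    from has_derivative_compose[OF fd_works[OF d] this] show ?thesis by (simp add: o_def)
  qed
  from pd_eq[OF this, of i] show ?thesis by (simp add: pderiv_i_def)
qed

lemma pd_sum: "finite S \<Longrightarrow> (\<And>j. j \<in> S \<Longrightarrow> f j differentiable (at x)) \<Longrightarrow>
  pderiv_i i (\<lambda>y. \<Sum>j\<in>S. f j y :: real) x = (\<Sum>j\<in>S. pderiv_i i (f j) x)"
  apply (rule pd_eq[THEN trans])
   apply (rule has_derivative_sum[OF fd_works], assumption)
  apply (simp add: pderiv_i_def)
  done

lemma pd_coord: "pderiv_i i (\<lambda>y::real^'n::finite. y $ k) x = (if i = k then 1 else 0)"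
  apply (rule pd_eq[THEN trans])
   apply (rule bounded_linear.has_derivative[OF bounded_linear_vec_nth has_derivative_ident])
  apply (simp add: axis_def)
  done

lemma C1_iff: "Ck 1 f \<longleftrightarrow> (\<forall>x. f differentiable (at x)) \<and> (\<forall>i. continuous_on UNIV (pderiv_i i f))"
  by (simp add: One_nat_def)

lemma C1_diffb: "Ck 1 f \<Longrightarrow> f differentiable (at x)"
  by (simp add: C1_iff)

lemma C1_cont: "Ck 1 f \<Longrightarrow> continuous_on UNIV f"
  by (metis C1_iff differentiable_at_imp_differentiable_on differentiable_imp_continuous_on)

lemma C1_pcont: "Ck 1 f \<Longrightarrow> continuous_on UNIV (pderiv_i i f)"
  by (simp add: C1_iff)

lemma C1_add: "Ck 1 f \<Longrightarrow> Ck 1 g \<Longrightarrow> Ck 1 (\<lambda>y. f y + g y)"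
proof -
  assume f: "Ck 1 f" and g: "Ck 1 g"
  have e: "pderiv_i i (\<lambda>y. f y + g y) = (\<lambda>y. pderiv_i i f y + pderiv_i i g y)" for i
    by (rule ext) (rule pd_add[OF C1_diffb[OF f] C1_diffb[OF g]])
  show ?thesis unfolding C1_iff e
    using C1_diffb[OF f] C1_diffb[OF g] C1_pcont[OF f] C1_pcont[OF g]
    by (simp add: differentiable_add continuous_on_add)
qed

lemma C1_diff: "Ck 1 f \<Longrightarrow> Ck 1 g \<Longrightarrow> Ck 1 (\<lambda>y. f y - g y)"
proof -
  assume f: "Ck 1 f" and g: "Ck 1 g"
  have e: "pderiv_i i (\<lambda>y. f y - g y) = (\<lambda>y. pderiv_i i f y - pderiv_i i g y)" for i
    by (rule ext) (rule pd_diff[OF C1_diffb[OF f] C1_diffb[OF g]])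
  show ?thesis unfolding C1_iff e
    using C1_diffb[OF f] C1_diffb[OF g] C1_pcont[OF f] C1_pcont[OF g]
    by (simp add: differentiable_diff continuous_on_diff)
qed

lemma C1_mult: "Ck 1 f \<Longrightarrow> Ck 1 g \<Longrightarrow> Ck 1 (\<lambda>y. f y * g y :: real)"
proof -
  assume f: "Ck 1 f" and g: "Ck 1 g"
  have e: "pderiv_i i (\<lambda>y. f y * g y) = (\<lambda>y. pderiv_i i f y * g y + f y * pderiv_i i g y)" for i
    by (rule ext) (rule pd_mult[OF C1_diffb[OF f] C1_diffb[OF g]])
  show ?thesis unfolding C1_iff e
    using C1_diffb[OF f] C1_diffb[OF g] C1_pcont[OF f] C1_pcont[OF g] C1_cont[OF f] C1_cont[OF g]
    by (simp add: differentiable_mult continuous_on_mult continuous_on_add)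
qed

lemma C1_const: "Ck 1 (\<lambda>y. c::real)"
  unfolding C1_iff by (simp add: pd_const)

lemma C1_exp: "Ck 1 f \<Longrightarrow> Ck 1 (\<lambda>y. exp (f y))"
proof -
  assume f: "Ck 1 f"
  have e: "pderiv_i i (\<lambda>y. exp (f y)) = (\<lambda>y. exp (f y) * pderiv_i i f y)" for i
    by (rule ext) (rule pd_exp[OF C1_diffb[OF f]])
  have "(\<lambda>y. exp (f y)) differentiable (at x)" for x
    by (rule differentiable_compose[of exp], simp add: differentiable_def,
        rule exI, rule DERIV_exp[unfolded has_field_derivative_def], rule C1_diffb[OF f])
  moreover have "continuous_on UNIV (\<lambda>y. exp (f y) * pderiv_i i f y)" for i
    using C1_pcont[OF f] C1_cont[OF f] by (intro continuous_on_mult continuous_on_exp)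
  ultimately show ?thesis unfolding C1_iff e by simp
qed

lemma C1_sum: "finite S \<Longrightarrow> (\<And>j. j \<in> S \<Longrightarrow> Ck 1 (f j)) \<Longrightarrow> Ck 1 (\<lambda>y. \<Sum>j\<in>S. f j y :: real)"
proof (induction S rule: finite_induct)
  case empty
  then show ?case using C1_const[of 0] by simp
next
  case (insert j S)
  then have "Ck 1 (\<lambda>y. f j y + (\<Sum>j\<in>S. f j y))" by (intro C1_add) auto
  then show ?case using insert by simp
qed

lemma C1_coord: "Ck 1 (\<lambda>y::real^'n::finite. y $ k)"
  unfolding C1_iff pd_coord
  using differentiableI[OF bounded_linear_imp_has_derivative[OF bounded_linear_vec_nth[of k]]]
  by auto

lemma smooth_C1: "smooth_Rn f \<Longrightarrow> Ck 1 f"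
  by (simp add: smooth_Rn_def)

lemma smooth_C1_pd: "smooth_Rn f \<Longrightarrow> Ck 1 (pderiv_i i f)"
proof -
  assume "smooth_Rn f"
  then have "Ck 2 f" by (simp add: smooth_Rn_def)
  then show ?thesis by (simp add: numeral_2_eq_2 One_nat_def)
qed

lemma line_deriv:
  fixes g :: "real^'n::finite \<Rightarrow> real"
  assumes "g differentiable (at (p + t *\<^sub>R axis i 1))"
  shows "((\<lambda>u. g (p + u *\<^sub>R axis i 1)) has_real_derivative pderiv_i i g (p + t *\<^sub>R axis i 1)) (at t)"
proof -
  let ?e = "axis i (1::real) :: real^'n"
  let ?y = "p + t *\<^sub>R ?e"
  have d1: "((\<lambda>u. p + u *\<^sub>R ?e) has_derivative (\<lambda>h. h *\<^sub>R ?e)) (at t)"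
    by (auto intro!: derivative_eq_intros)
  have d2: "(g has_derivative frechet_derivative g (at ?y)) (at (p + t *\<^sub>R ?e))"
    using fd_works[OF assms] .
  from has_derivative_compose[OF d1 d2]
  have "((\<lambda>u. g (p + u *\<^sub>R ?e)) has_derivative (\<lambda>h. frechet_derivative g (at ?y) (h *\<^sub>R ?e))) (at t)"
    by (simp add: o_def)
  moreover have "(\<lambda>h. frechet_derivative g (at ?y) (h *\<^sub>R ?e)) = (\<lambda>h. pderiv_i i g ?y * h)"
    using linear_scale[OF has_derivative_linear[OF d2]] by (auto simp: pderiv_i_def)
  ultimately show ?thesis by (simp add: has_field_derivative_def)
qed

lemma line_zero_deriv:
  fixes \<rho> :: "real^'n::finite \<Rightarrow> real"
  assumes C: "Ck 1 \<rho>"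
    and nz: "\<And>u. \<bar>u\<bar> \<le> \<bar>d\<bar> \<Longrightarrow> pderiv_i i \<rho> (a + u *\<^sub>R axis i 1) \<noteq> 0"
    and eq: "\<rho> a = \<rho> (a + d *\<^sub>R axis i 1)"
  shows "d = 0"
proof (rule ccontr)
  assume "d \<noteq> 0"
  define lo where "lo = min 0 d"
  define hi where "hi = max 0 d"
  have lohi: "lo < hi" using \<open>d \<noteq> 0\<close> by (auto simp: lo_def hi_def)
  have der: "\<And>u. lo \<le> u \<Longrightarrow> u \<le> hi \<Longrightarrow> ((\<lambda>u. \<rho> (a + u *\<^sub>R axis i 1)) has_real_derivative pderiv_i i \<rho> (a + u *\<^sub>R axis i 1)) (at u)"
    using line_deriv C1_diffb[OF C] by blast
  from MVT2[OF lohi der] obtain z where z: "lo < z" "z < hi"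
    "\<rho> (a + hi *\<^sub>R axis i 1) - \<rho> (a + lo *\<^sub>R axis i 1) = (hi - lo) * pderiv_i i \<rho> (a + z *\<^sub>R axis i 1)"
    by blast
  have "\<rho> (a + hi *\<^sub>R axis i 1) = \<rho> (a + lo *\<^sub>R axis i 1)"
    using eq by (auto simp: lo_def hi_def min_def max_def)
  with z lohi have "pderiv_i i \<rho> (a + z *\<^sub>R axis i 1) = 0" by simp
  moreover have "\<bar>z\<bar> \<le> \<bar>d\<bar>" using z by (auto simp: lo_def hi_def min_def max_def split: if_splits)
  ultimately show False using nz by blast
qed

lemma local_negligible:
  fixes \<rho> :: "real^'n::finite \<Rightarrow> real" and F :: "(real^'n) set"
  assumes C: "Ck 1 \<rho>" and F: "F \<subseteq> {x. \<rho> x = 0}" and Fm: "F \<in> lmeasurable"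
    and nz: "\<And>y. y \<in> ball p (2*r) \<Longrightarrow> pderiv_i i \<rho> y \<noteq> 0" and r: "r > 0"
  shows "negligible (F \<inter> ball p r)"
proof -
  let ?e = "axis i (1::real) :: real^'n"
  define A where "A = F \<inter> ball p r"
  have Am: "A \<in> lmeasurable" unfolding A_def using Fm by (intro fmeasurable.Int) auto
  have ne: "norm ?e = 1" by simp
  define T where "T = (\<lambda>(t::real). (+) (t *\<^sub>R ?e) ` A)"
  have Tm: "T t \<in> lmeasurable" for t unfolding T_def using measurable_translation[OF Am] .
  have Tmeas: "measure lebesgue (T t) = measure lebesgue A" for t
    unfolding T_def by (rule measure_translation)
  have Tsub: "T t \<subseteq> ball p (2*r)" if "\<bar>t\<bar> < r" for t
  proof
    fix y assume "y \<in> T t"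
    then obtain a where a: "a \<in> A" "y = t *\<^sub>R ?e + a" unfolding T_def by auto
    have "dist p y \<le> dist p a + dist a y" by (rule dist_triangle)
    also have "dist a y = norm (t *\<^sub>R ?e)" using a by (simp add: dist_norm)
    finally have "dist p y \<le> dist p a + norm (t *\<^sub>R ?e)" .
    also have "\<dots> < r + r" using a that by (intro add_strict_mono) (auto simp: A_def dist_commute)
    finally show "y \<in> ball p (2*r)" by simp
  qed
  have Tdisj: "T t \<inter> T t' = {}" if "0 \<le> t" "t < r" "0 \<le> t'" "t' < r" "t \<noteq> t'" for t t'
  proof (rule ccontr)
    assume "T t \<inter> T t' \<noteq> {}"
    then obtain a a' where aa: "a \<in> A" "a' \<in> A" "t *\<^sub>R ?e + a = t' *\<^sub>R ?e + a'"
      unfolding T_def by auto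
    have a': "a' = a + (t - t') *\<^sub>R ?e" using aa(3) by (simp add: algebra_simps)
    have "t - t' = 0"
    proof (rule line_zero_deriv[OF C, of "t - t'" i a])
      fix u :: real assume u: "\<bar>u\<bar> \<le> \<bar>t - t'\<bar>"
      have "dist p a < r" using aa by (auto simp: A_def)
      moreover have "\<bar>u\<bar> < r" using u that by linarith
      ultimately have "\<bar>u\<bar> < 2 * r - dist p a" by linarith
      have "dist p (a + u *\<^sub>R ?e) \<le> dist p a + dist a (a + u *\<^sub>R ?e)" by (rule dist_triangle)
      also have "dist a (a + u *\<^sub>R ?e) = \<bar>u\<bar>" by (simp add: dist_norm)
      finally have "a + u *\<^sub>R ?e \<in> ball p (2*r)" using \<open>\<bar>u\<bar> < 2 * r - dist p a\<close> by simp
      then show "pderiv_i i \<rho> (a + u *\<^sub>R ?e) \<noteq> 0" using nz by blast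
    next
      have "\<rho> a = 0" "\<rho> a' = 0" using aa(1,2) F by (auto simp: A_def)
      then show "\<rho> a = \<rho> (a + (t - t') *\<^sub>R ?e)" using a' by simp
    qed
    then show False using that by simp
  qed
  have "measure lebesgue A = 0"
  proof (rule ccontr)
    assume "measure lebesgue A \<noteq> 0"
    then have mpos: "measure lebesgue A > 0" using measure_nonneg[of lebesgue A] by linarith
    obtain k :: nat where k: "real k > measure lebesgue (ball p (2*r)) / measure lebesgue A"
      using reals_Archimedean2 by blast
    define tt where "tt = (\<lambda>m::nat. real m * r / (real k + 1))"
    have tt_lt: "tt m < r" "0 \<le> tt m" if "m \<le> k" for m
    proof -
      have h: "r * real m < r * (real k + 1)" by (rule mult_strict_left_mono) (use that r in auto)
      have "r * real m / (real k + 1) < r * (real k + 1) / (real k + 1)"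
        by (rule divide_strict_right_mono[OF h]) simp
      then show "tt m < r" by (simp add: tt_def mult.commute)
      show "0 \<le> tt m" using r by (simp add: tt_def)
    qed
    have tt_inj: "inj_on tt {0..k}" using r by (auto simp: inj_on_def tt_def field_simps)
    have "measure lebesgue (\<Union>(T ` tt ` {0..k})) = (\<Sum>t\<in>tt ` {0..k}. measure lebesgue (T t))"
      by (rule measure_negligible_finite_Union_image)
        (use Tm Tdisj tt_lt in \<open>auto simp: pairwise_def\<close>)
    also have "\<dots> = real (k+1) * measure lebesgue A"
      using tt_inj by (simp add: Tmeas card_image)
    finally have eq: "measure lebesgue (\<Union>(T ` tt ` {0..k})) = real (k+1) * measure lebesgue A" .
    have Tsub': "T (tt m) \<subseteq> ball p (2*r)" if "m \<le> k" for m
      using Tsub[of "tt m"] tt_lt[OF that] by simp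
    have "measure lebesgue (\<Union>(T ` tt ` {0..k})) \<le> measure lebesgue (ball p (2*r))"
    proof (rule measure_mono_fmeasurable)
      show "\<Union>(T ` tt ` {0..k}) \<subseteq> ball p (2*r)" using Tsub' by fastforce
      show "\<Union>(T ` tt ` {0..k}) \<in> sets lebesgue" using Tm by (auto intro!: fmeasurable.finite_UN)
    qed simp
    with eq have "real (k+1) * measure lebesgue A \<le> measure lebesgue (ball p (2*r))" by simp
    with k mpos show False by (simp add: field_simps)
  qed
  then show ?thesis using Am negligible_iff_measure0 A_def by blast
qed

lemma frontier_negligible:
  fixes \<Omega> :: "(real^'n::finite) set"
  assumes "smooth_bounded_domain \<Omega>" shows "negligible (frontier \<Omega>)"
proof -
  from assms have bdd: "bounded \<Omega>" and "\<exists>\<rho>. smooth_Rn \<rho> \<and> \<Omega> = {x. \<rho> x < 0} \<and> frontier \<Omega> = {x. \<rho> x = 0} \<and>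
           (\<forall>x\<in>frontier \<Omega>. grad \<rho> x \<noteq> 0)"
    unfolding smooth_bounded_domain_def by auto
  then obtain \<rho> where \<rho>: "smooth_Rn \<rho>" "frontier \<Omega> = {x. \<rho> x = 0}"
      "\<forall>x\<in>frontier \<Omega>. grad \<rho> x \<noteq> 0" by blast
  have C: "Ck 1 \<rho>" using smooth_C1 \<rho>(1) .
  have Fm: "frontier \<Omega> \<in> lmeasurable" using lmeasurable_frontier bdd .
  show ?thesis
  proof (rule locally_negligible_alt[THEN iffD2], rule ballI)
    fix p assume p: "p \<in> frontier \<Omega>"
    have "grad \<rho> p \<noteq> 0" using \<rho>(3) p by blast
    then obtain i where i: "pderiv_i i \<rho> p \<noteq> 0" unfolding grad_def vec_eq_iff by auto
    have "open {y. pderiv_i i \<rho> y \<noteq> 0}"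
      using open_Collect_neq[OF C1_pcont[OF C] continuous_on_const, of i 0] by simp
    then obtain R where R: "R > 0" "ball p R \<subseteq> {y. pderiv_i i \<rho> y \<noteq> 0}"
      using i unfolding open_contains_ball by blast
    have "negligible (frontier \<Omega> \<inter> ball p (R/2))"
    proof (rule local_negligible[OF C _ Fm, of p "R/2" i])
      show "frontier \<Omega> \<subseteq> {x. \<rho> x = 0}" using \<rho>(2) by simp
      show "R/2 > 0" using R by simp
      fix y assume "y \<in> ball p (2 * (R / 2))"
      then show "pderiv_i i \<rho> y \<noteq> 0" using R by auto
    qed
    moreover have "openin (top_of_set (frontier \<Omega>)) (frontier \<Omega> \<inter> ball p (R/2))"
      by (rule openin_open_Int) simp
    moreover have "p \<in> frontier \<Omega> \<inter> ball p (R/2)" using p R by simp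
    ultimately show "\<exists>U. openin (top_of_set (frontier \<Omega>)) U \<and> p \<in> U \<and> negligible U"
      by blast
  qed
qed

lemma cont_integrable:
  fixes f :: "real^'n::finite \<Rightarrow> real"
  assumes "continuous_on UNIV f" "bounded S" "S \<in> sets lebesgue"
  shows "f absolutely_integrable_on S" "f integrable_on S"
proof -
  obtain a where a: "S \<subseteq> cbox (-a) a" using bounded_subset_cbox_symmetric[OF assms(2)] by blast
  have "f absolutely_integrable_on cbox (-a) a"
    by (rule absolutely_integrable_continuous) (use assms(1) continuous_on_subset in blast)
  then show "f absolutely_integrable_on S" using set_integrable_subset assms(3) a by blast
  then show "f integrable_on S" using set_lebesgue_integral_eq_integral(1) by blast
qed

lemma mvt_line:
  fixes g :: "real^'n::finite \<Rightarrow> real"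
  assumes C: "Ck 1 g" and bd: "\<And>u. \<bar>u\<bar> \<le> \<bar>t\<bar> \<Longrightarrow> \<bar>pderiv_i i g (p + u *\<^sub>R axis i 1)\<bar> \<le> L"
  shows "\<bar>g (p + t *\<^sub>R axis i 1) - g p\<bar> \<le> L * \<bar>t\<bar>"
proof (cases "t = 0")
  case True then show ?thesis by simp
next
  case False
  define lo where "lo = min 0 t"
  define hi where "hi = max 0 t"
  have lohi: "lo < hi" using False by (auto simp: lo_def hi_def)
  have der: "\<And>u. lo \<le> u \<Longrightarrow> u \<le> hi \<Longrightarrow> ((\<lambda>u. g (p + u *\<^sub>R axis i 1)) has_real_derivative pderiv_i i g (p + u *\<^sub>R axis i 1)) (at u)"
    using line_deriv C1_diffb[OF C] by blast
  from MVT2[OF lohi der] obtain z where z: "lo < z" "z < hi"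
    "g (p + hi *\<^sub>R axis i 1) - g (p + lo *\<^sub>R axis i 1) = (hi - lo) * pderiv_i i g (p + z *\<^sub>R axis i 1)"
    by blast
  have "\<bar>z\<bar> \<le> \<bar>t\<bar>" using z by (auto simp: lo_def hi_def min_def max_def split: if_splits)
  then have "\<bar>pderiv_i i g (p + z *\<^sub>R axis i 1)\<bar> \<le> L" by (rule bd)
  moreover have "hi - lo = \<bar>t\<bar>" by (auto simp: lo_def hi_def)
  moreover have "\<bar>g (p + t *\<^sub>R axis i 1) - g p\<bar> = \<bar>g (p + hi *\<^sub>R axis i 1) - g (p + lo *\<^sub>R axis i 1)\<bar>"
    by (auto simp: lo_def hi_def min_def max_def)
  ultimately show ?thesis using z(3) by (simp add: abs_mult mult.commute[of "\<bar>t\<bar>"] mult_right_mono)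
qed

lemma translate_integral:
  fixes f :: "real^'n::finite \<Rightarrow> real"
  assumes I: "(f has_integral I) UNIV" and van: "\<And>x. norm x \<ge> R \<Longrightarrow> f x = 0" and c: "norm c \<le> 1"
  shows "((\<lambda>x. f (x + c)) has_integral I) UNIV"
proof -
  obtain a :: "real^'n" where a: "cball 0 (R + 2) \<subseteq> cbox (-a) a"
    using bounded_subset_cbox_symmetric[OF bounded_cball] by blast
  have ff: "f = (\<lambda>x. if x \<in> cbox (-a) a then f x else 0)"
  proof
    fix x :: "real^'n" show "f x = (if x \<in> cbox (-a) a then f x else 0)"
      using a van[of x] by (cases "norm x \<ge> R") (auto simp: subset_iff)
  qed
  have "(f has_integral I) (cbox (-a) a)"
    using I ff has_integral_restrict_UNIV[of "cbox (-a) a" f I] by metis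
  from has_integral_shift_cbox[OF this, of c]
  have *: "((\<lambda>x. f (x + c)) has_integral I) (cbox (- a - c) (a - c))" .
  show ?thesis
  proof (rule has_integral_on_superset[OF *])
    fix x assume x: "x \<notin> cbox (- a - c) (a - c)"
    have "x + c \<notin> cbox (-a) a"
    proof
      assume "x + c \<in> cbox (-a) a"
      then have "x \<in> cbox (- a - c) (a - c)"
        by (auto simp: mem_box algebra_simps inner_diff_left inner_add_left)
      with x show False by simp
    qed
    then have "norm (x + c) > R + 2" using a by (auto simp: subset_iff not_le)
    then have "norm (x + c) \<ge> R" by simp
    then show "f (x + c) = 0" by (rule van)
  qed simp
qed

lemma ibp0:
  fixes \<Omega> :: "(real^'n::finite) set" and g :: "real^'n \<Rightarrow> real"
  assumes bdd: "bounded \<Omega>" and op: "open \<Omega>" and negF: "negligible (frontier \<Omega>)"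
    and C: "Ck 1 g" and zero: "\<forall>x\<in>frontier \<Omega>. g x = 0"
  shows "pderiv_i i g integrable_on \<Omega> \<and> integral \<Omega> (pderiv_i i g) = 0"
proof -
  let ?e = "axis i (1::real) :: real^'n"
  have ne: "norm ?e = 1" by simp
  obtain R where R: "R > 0" "\<Omega> \<subseteq> ball 0 R" using bounded_subset_ballD[OF bdd] by blast
  have clos: "closure \<Omega> \<subseteq> cball 0 R"
    using closure_mono[OF R(2)] closure_ball[OF R(1), of "0::real^'n"] by simp
  have Fcl: "frontier \<Omega> \<subseteq> closure \<Omega>" by (auto simp: frontier_def)
  have Fc: "frontier \<Omega> \<subseteq> cball 0 R" using Fcl clos by blast
  have Om: "\<Omega> \<in> sets lebesgue" using lmeasurable_open[OF bdd op] by (simp add: fmeasurableD)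
  have "compact (pderiv_i i g ` cball 0 (R+1))"
    by (rule compact_continuous_image[OF continuous_on_subset[OF C1_pcont[OF C]]]) auto
  then obtain L where L: "\<forall>y\<in>cball 0 (R+1). \<bar>pderiv_i i g y\<bar> \<le> L"
    using compact_imp_bounded bounded_real by (metis imageI)
  have L0: "L \<ge> 0" using L[rule_format, of 0] R by simp
  define h where "h x = (if x \<in> \<Omega> then g x else 0)" for x
  have hvan: "h x = 0" if "norm x \<ge> R" for x
    using that R(2) by (auto simp: h_def subset_iff)
  have bd_from: "\<bar>g (p + t *\<^sub>R ?e) - g p\<bar> \<le> L * \<bar>t\<bar>" if "norm p \<le> R" "\<bar>t\<bar> \<le> 1" for p t
  proof (rule mvt_line[OF C])
    fix u :: real assume "\<bar>u\<bar> \<le> \<bar>t\<bar>"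
    have "norm (p + u *\<^sub>R ?e) \<le> norm p + norm (u *\<^sub>R ?e)" by (rule norm_triangle_ineq)
    also have "\<dots> \<le> R + 1" using that \<open>\<bar>u\<bar> \<le> \<bar>t\<bar>\<close> by simp
    finally show "\<bar>pderiv_i i g (p + u *\<^sub>R ?e)\<bar> \<le> L" using L by simp
  qed
  have lip: "\<bar>h (x + t *\<^sub>R ?e) - h x\<bar> \<le> L * \<bar>t\<bar>" if t1: "\<bar>t\<bar> \<le> 1" for x t
  proof -
    define q where "q = x + t *\<^sub>R ?e"
    have seg: "y \<in> closed_segment x q \<Longrightarrow> \<exists>s. 0 \<le> s \<and> s \<le> 1 \<and> y = x + (s * t) *\<^sub>R ?e" for y
      unfolding closed_segment_def q_def
      by (auto simp: algebra_simps)
    show ?thesis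
    proof (cases "x \<in> \<Omega>")
      case xin: True
      have nx: "norm x \<le> R" using xin R(2) by (auto simp: subset_iff)
      show ?thesis
      proof (cases "q \<in> \<Omega>")
        case True
        then show ?thesis using xin bd_from[OF nx t1] by (simp add: h_def q_def)
      next
        case False
        have "closed_segment x q \<inter> frontier \<Omega> \<noteq> {}"
          by (rule connected_Int_frontier) (use xin False in auto)
        then obtain y where y: "y \<in> closed_segment x q" "y \<in> frontier \<Omega>" by blast
        obtain s where s: "0 \<le> s" "s \<le> 1" "y = x + (s * t) *\<^sub>R ?e" using seg[OF y(1)] by blast
        have st: "\<bar>s * t\<bar> \<le> \<bar>t\<bar>" using s by (simp add: abs_mult mult_left_le_one_le)
        have "\<bar>h q - h x\<bar> = \<bar>g y - g x\<bar>" using xin False zero y(2) by (simp add: h_def)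
        also have "\<dots> \<le> L * \<bar>s * t\<bar>" using bd_from[OF nx] st t1 s(3) by simp
        also have "\<dots> \<le> L * \<bar>t\<bar>" using st L0 by (simp add: mult_left_mono)
        finally show ?thesis by (simp add: q_def)
      qed
    next
      case xout: False
      show ?thesis
      proof (cases "q \<in> \<Omega>")
        case False
        then show ?thesis using xout L0 by (simp add: h_def q_def)
      next
        case qin: True
        have "closed_segment x q \<inter> frontier \<Omega> \<noteq> {}"
          by (rule connected_Int_frontier) (use xout qin in auto)
        then obtain y where y: "y \<in> closed_segment x q" "y \<in> frontier \<Omega>" by blast
        obtain s where s: "0 \<le> s" "s \<le> 1" "y = x + (s * t) *\<^sub>R ?e" using seg[OF y(1)] by blast
        have ny: "norm y \<le> R" using y(2) Fc by auto
        have qy: "q = y + ((1 - s) * t) *\<^sub>R ?e" using s(3) by (simp add: q_def algebra_simps)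
        have st: "\<bar>(1 - s) * t\<bar> \<le> \<bar>t\<bar>" using s by (simp add: abs_mult mult_left_le_one_le)
        have "\<bar>h q - h x\<bar> = \<bar>g (y + ((1 - s) * t) *\<^sub>R ?e) - g y\<bar>" using xout qin zero y(2) qy by (simp add: h_def)
        also have "\<dots> \<le> L * \<bar>(1 - s) * t\<bar>" using bd_from[OF ny] st t1 by simp
        also have "\<dots> \<le> L * \<bar>t\<bar>" using st L0 by (simp add: mult_left_mono)
        finally show ?thesis by (simp add: q_def)
      qed
    qed
  qed
  define tk where "tk k = inverse (real (Suc k))" for k
  have tk_pos: "tk k > 0" for k by (simp add: tk_def)
  have tk_le: "tk k \<le> 1" for k unfolding tk_def by (rule inverse_le_1_iff[THEN iffD2]) simp
  have tk_lim: "tk \<longlonglongrightarrow> 0" unfolding tk_def by (rule LIMSEQ_inverse_real_of_nat)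
  define Q where "Q k x = real (Suc k) * (h (x + tk k *\<^sub>R ?e) - h x)" for k x
  have gI: "g integrable_on \<Omega>" using cont_integrable(2)[OF C1_cont[OF C] bdd Om] .
  have "h integrable_on UNIV"
    using gI integrable_restrict_UNIV[of \<Omega> g] by (simp add: h_def[abs_def])
  then have hI: "(h has_integral integral UNIV h) UNIV" by (rule integrable_integral)
  have QI: "(Q k has_integral 0) UNIV" for k
  proof -
    have "((\<lambda>x. h (x + tk k *\<^sub>R ?e)) has_integral integral UNIV h) UNIV"
      by (rule translate_integral[OF hI hvan]) (use tk_pos[of k] tk_le[of k] in auto)
    from has_integral_diff[OF this hI]
    have "((\<lambda>x. h (x + tk k *\<^sub>R ?e) - h x) has_integral 0) UNIV" by simp
    from has_integral_mult_right[OF this, of "real (Suc k)"] show ?thesis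
      by (simp add: Q_def[abs_def])
  qed
  define B where "B x = (if x \<in> cball 0 (R+1) then L else 0)" for x :: "real^'n"
  have "(\<lambda>x::real^'n. L) integrable_on cball 0 (R+1)" by (rule integrable_on_const) simp
  then have BI: "B integrable_on UNIV"
    unfolding B_def[abs_def] by (rule integrable_restrict_UNIV[THEN iffD2])
  have Qbd: "norm (Q k x) \<le> B x" for k x
  proof (cases "x \<in> cball 0 (R+1)")
    case True
    have "norm (Q k x) = real (Suc k) * \<bar>h (x + tk k *\<^sub>R ?e) - h x\<bar>" by (simp add: Q_def abs_mult)
    also have "\<dots> \<le> real (Suc k) * (L * \<bar>tk k\<bar>)"
      by (rule mult_left_mono[OF lip]) (use tk_le[of k] tk_pos[of k] in auto)
    also have "\<dots> = L" by (simp add: tk_def)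
    finally show ?thesis using True by (simp add: B_def)
  next
    case False
    then have nx: "norm x > R + 1" by simp
    have "norm x \<le> norm (x + tk k *\<^sub>R ?e) + norm (tk k *\<^sub>R ?e)"
      by (metis add_diff_cancel norm_triangle_ineq4)
    then have "norm (x + tk k *\<^sub>R ?e) \<ge> R" using nx tk_le[of k] tk_pos[of k] by simp
    then have "Q k x = 0" using hvan[of x] hvan[of "x + tk k *\<^sub>R ?e"] nx by (simp add: Q_def)
    then show ?thesis using False by (simp add: B_def)
  qed
  define G where "G x = (if x \<in> \<Omega> then pderiv_i i g x else 0)" for x
  define S where "S = UNIV - frontier \<Omega>"
  have conv: "(\<lambda>k. Q k x) \<longlonglongrightarrow> G x" if xS: "x \<in> S" for x
  proof (cases "x \<in> \<Omega>")
    case True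
    obtain \<epsilon> where \<epsilon>: "\<epsilon> > 0" "ball x \<epsilon> \<subseteq> \<Omega>" using op True open_contains_ball by blast
    have "((\<lambda>u. g (x + u *\<^sub>R ?e)) has_real_derivative pderiv_i i g (x + 0 *\<^sub>R ?e)) (at 0)"
      by (rule line_deriv) (rule C1_diffb[OF C])
    then have "((\<lambda>u. (g (x + u *\<^sub>R ?e) - g x) / u) \<longlongrightarrow> pderiv_i i g x) (at 0)"
      by (simp add: has_field_derivative_iff)
    moreover have "filterlim tk (at 0) sequentially"
    proof -
      have "\<forall>k. tk k \<noteq> 0" using tk_pos by (metis less_irrefl)
      then show ?thesis using tk_lim by (simp add: filterlim_at)
    qed
    ultimately have lim1: "(\<lambda>k. (g (x + tk k *\<^sub>R ?e) - g x) / tk k) \<longlonglongrightarrow> pderiv_i i g x"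
      by (rule filterlim_compose)
    have ev: "eventually (\<lambda>k. tk k < \<epsilon>) sequentially" using order_tendstoD(2)[OF tk_lim \<epsilon>(1)] .
    have "eventually (\<lambda>k. (g (x + tk k *\<^sub>R ?e) - g x) / tk k = Q k x) sequentially"
    proof (rule eventually_mono[OF ev])
      fix k assume "tk k < \<epsilon>"
      then have "x + tk k *\<^sub>R ?e \<in> ball x \<epsilon>" using tk_pos[of k] by (simp add: dist_norm)
      then have "x + tk k *\<^sub>R ?e \<in> \<Omega>" using \<epsilon>(2) by blast
      then show "(g (x + tk k *\<^sub>R ?e) - g x) / tk k = Q k x"
        using True by (simp add: Q_def h_def tk_def divide_inverse mult.commute)
    qed
    from Lim_transform_eventually[OF lim1 this] show ?thesis using True by (simp add: G_def)
  next
    case False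
    with xS have "x \<notin> closure \<Omega>" using op by (simp add: S_def frontier_def interior_open)
    moreover have "open (- closure \<Omega>)" by auto
    ultimately obtain \<epsilon> where \<epsilon>: "\<epsilon> > 0" "ball x \<epsilon> \<subseteq> - closure \<Omega>" using open_contains_ball by blast
    have ev: "eventually (\<lambda>k. tk k < \<epsilon>) sequentially" using order_tendstoD(2)[OF tk_lim \<epsilon>(1)] .
    have "eventually (\<lambda>k. 0 = Q k x) sequentially"
    proof (rule eventually_mono[OF ev])
      fix k assume "tk k < \<epsilon>"
      then have "x + tk k *\<^sub>R ?e \<in> ball x \<epsilon>" using tk_pos[of k] by (simp add: dist_norm)
      then have "x + tk k *\<^sub>R ?e \<notin> \<Omega>" using \<epsilon>(2) closure_subset by blast
      then show "0 = Q k x" using False by (simp add: Q_def h_def)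
    qed
    from Lim_transform_eventually[OF tendsto_const this] show ?thesis using False by (simp add: G_def)
  qed
  have negS: "negligible {x \<in> UNIV - S. f x \<noteq> 0}" "negligible {x \<in> S - UNIV. f x \<noteq> (0::real)}" for f :: "real^'n \<Rightarrow> real"
    by (rule negligible_subset[OF negF], auto simp: S_def)+
  have QS: "Q k integrable_on S" "integral S (Q k) = 0" for k
    using QI[of k] has_integral_spike_set_eq[OF negS(1)[of "Q k"] negS(2)[of "Q k"]]
    by (auto simp: integrable_on_def integral_unique)
  have BS: "B integrable_on S"
    using BI has_integral_spike_set_eq[OF negS(1)[of B] negS(2)[of B]] by (auto simp: integrable_on_def)
  have dc: "G integrable_on S" "(\<lambda>k. integral S (Q k)) \<longlonglongrightarrow> integral S G"
    by (rule dominated_convergence[OF QS(1) BS Qbd conv], assumption)+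
  have GS0: "integral S G = 0"
    using dc(2) QS(2) LIMSEQ_unique[OF _ tendsto_const] by simp
  obtain IG where IG: "(G has_integral IG) S" using dc(1) by (auto simp: integrable_on_def)
  then have IG0: "IG = 0" using GS0 integral_unique by metis
  have "(G has_integral 0) UNIV"
    using IG IG0 has_integral_spike_set_eq[OF negS(1)[of G] negS(2)[of G]] by simp
  then have "(pderiv_i i g has_integral 0) \<Omega>"
    using has_integral_restrict_UNIV[of \<Omega> "pderiv_i i g" 0] by (simp add: G_def[abs_def])
  then show ?thesis by (auto simp: integrable_on_def integral_unique)
qed

lemma pd_divc: "f differentiable (at x) \<Longrightarrow>
  pderiv_i i (\<lambda>y. f y / c :: real) x = pderiv_i i f x / c"
  using pd_cmult[of f x i "inverse c"] by (simp add: divide_inverse mult.commute)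

lemma C1_divc: "Ck 1 f \<Longrightarrow> Ck 1 (\<lambda>y. f y / c :: real)"
  using C1_mult[OF _ C1_const, of f "inverse c"] by (simp add: divide_inverse)

lemma gradsq: "(norm (grad f x))\<^sup>2 = (\<Sum>i\<in>UNIV. (pderiv_i i f x)\<^sup>2)"
  unfolding power2_norm_eq_inner by (simp add: inner_vec_def grad_def power2_eq_square)

lemma grad_comp: "grad f x $ k = pderiv_i k f x"
  by (simp add: grad_def)

lemma mv_comp: "(M *v u) $ i = (\<Sum>k\<in>UNIV. M $ i $ k * u $ k)"
  by (simp add: matrix_vector_mult_def)

definition Bf :: "real^'n::finite^'n \<Rightarrow> real^'n \<Rightarrow> real^'n \<Rightarrow> real" where
  "Bf M u v = (M *v u) \<bullet> v"

lemma Bf_add1: "Bf M (u1 + u2) v = Bf M u1 v + Bf M u2 v"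
  by (simp add: Bf_def matrix_vector_right_distrib inner_add_left)
lemma Bf_add2: "Bf M u (v1 + v2) = Bf M u v1 + Bf M u v2"
  by (simp add: Bf_def inner_add_right)
lemma Bf_diff1: "Bf M (u1 - u2) v = Bf M u1 v - Bf M u2 v"
  by (simp add: Bf_def matrix_vector_mult_diff_distrib inner_diff_left)
lemma Bf_diff2: "Bf M u (v1 - v2) = Bf M u v1 - Bf M u v2"
  by (simp add: Bf_def inner_diff_right)
lemma Bf_scale1: "Bf M (c *\<^sub>R u) v = c * Bf M u v"
  by (simp add: Bf_def linear_scale[OF matrix_vector_mul_linear])
lemma Bf_scale2: "Bf M u (c *\<^sub>R v) = c * Bf M u v"
  by (simp add: Bf_def)
lemma Bf_sum1: "Bf M (\<Sum>j\<in>S. f j) v = (\<Sum>j\<in>S. Bf M (f j) v)"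
  by (simp add: Bf_def linear_sum[OF matrix_vector_mul_linear] inner_sum_left)
lemma Bf_sum2: "Bf M u (\<Sum>j\<in>S. f j) = (\<Sum>j\<in>S. Bf M u (f j))"
  by (simp add: Bf_def inner_sum_right)
lemma Bf_sym: "transpose M = M \<Longrightarrow> Bf M u v = Bf M v u"
  unfolding Bf_def
  by (metis dot_lmul_matrix inner_commute vector_transpose_matrix)

lemmas Bf_simps = Bf_add1 Bf_add2 Bf_diff1 Bf_diff2 Bf_scale1 Bf_scale2

lemma Bf_grad: "Bf M (grad f x) (grad g x) = (\<Sum>i\<in>UNIV. (\<Sum>k\<in>UNIV. M $ i $ k * pderiv_i k f x) * pderiv_i i g x)"
  by (simp add: Bf_def inner_vec_def mv_comp grad_def)

lemma key_alg:
  fixes M :: "real^'n::finite^'n"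
  assumes sym: "transpose M = M" and E: "E > 0"
    and hw: "w = E * (v + A)"
    and hgw: "gw = E *\<^sub>R (gv + gA) + (s * w) *\<^sub>R gp"
    and hgpsi: "gpsi = (1/E) *\<^sub>R (gv - (s * v) *\<^sub>R gp)"
    and hpsi: "psi = v / E"
    and eik: "Bf M gp gp = a"
  shows "Bf M gw gpsi + psi * (s^2 * a * w)
       = Bf M gv gv + Bf M gA gv - s * v * Bf M gp gA + s * A * Bf M gp gv"
proof -
  have s1: "Bf M gv gp = Bf M gp gv" "Bf M gA gp = Bf M gp gA" using Bf_sym[OF sym] by auto
  show ?thesis
    unfolding hgw hgpsi hpsi hw
    using E by (simp add: Bf_simps s1 eik field_simps power2_eq_square)
qed

lemma telescope:
  fixes s :: real
  assumes s: "s > 0" and T0: "T 0 = 0" and TS: "\<forall>j<N. T (Suc j) = - D j"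
  shows "(\<Sum>j\<le>N. (D j + s * T j) / s^j) = D N / s^N"
  using TS
proof (induction N)
  case 0 then show ?case using T0 by simp
next
  case (Suc N)
  then have IH: "(\<Sum>j\<le>N. (D j + s * T j) / s^j) = D N / s^N" by simp
  have "T (Suc N) = - D N" using Suc.prems by simp
  then show ?case using IH s by (simp add: field_simps)
qed

lemma ibpF:
  fixes \<Omega> :: "(real^'n::finite) set"
  assumes bdd: "bounded \<Omega>" and op: "open \<Omega>" and negF: "negligible (frontier \<Omega>)"
    and C\<psi>: "Ck 1 \<psi>" and z\<psi>: "\<forall>x\<in>frontier \<Omega>. \<psi> x = 0" and CF: "\<And>i. Ck 1 (F i)"
  shows "((\<lambda>x. \<Sum>i\<in>UNIV. F i x * pderiv_i i \<psi> x + \<psi> x * pderiv_i i (F i) x) has_integral 0) \<Omega>"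
proof -
  have each: "((\<lambda>x. F i x * pderiv_i i \<psi> x + \<psi> x * pderiv_i i (F i) x) has_integral 0) \<Omega>" for i
  proof -
    have Cg: "Ck 1 (\<lambda>y. \<psi> y * F i y)" by (rule C1_mult[OF C\<psi> CF])
    have "pderiv_i i (\<lambda>y. \<psi> y * F i y) integrable_on \<Omega> \<and> integral \<Omega> (pderiv_i i (\<lambda>y. \<psi> y * F i y)) = 0"
      by (rule ibp0[OF bdd op negF Cg]) (use z\<psi> in simp)
    then have "(pderiv_i i (\<lambda>y. \<psi> y * F i y) has_integral 0) \<Omega>"
      using integrable_integral by fastforce
    moreover have "pderiv_i i (\<lambda>y. \<psi> y * F i y) = (\<lambda>x. F i x * pderiv_i i \<psi> x + \<psi> x * pderiv_i i (F i) x)"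
      by (rule ext, subst pd_mult[OF C1_diffb[OF C\<psi>] C1_diffb[OF CF]]) (simp add: mult.commute)
    ultimately show ?thesis by simp
  qed
  show ?thesis using has_integral_sum[of UNIV "\<lambda>i x. F i x * pderiv_i i \<psi> x + \<psi> x * pderiv_i i (F i) x" "\<lambda>i. 0" \<Omega>] each
    by simp
qed

lemma C1_grad_cont: "Ck 1 f \<Longrightarrow> continuous_on UNIV (\<lambda>x. (norm (grad f x))\<^sup>2)"
  unfolding gradsq by (intro continuous_on_sum continuous_on_power C1_pcont) auto

lemma poincare:
  fixes \<Omega> :: "(real^'n::finite) set"
  assumes bdd: "bounded \<Omega>" and op: "open \<Omega>" and negF: "negligible (frontier \<Omega>)"
  shows "\<exists>P>0. \<forall>v. Ck 1 v \<longrightarrow> (\<forall>x\<in>frontier \<Omega>. v x = 0) \<longrightarrow>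
     integral \<Omega> (\<lambda>x. (v x)\<^sup>2) \<le> P * integral \<Omega> (\<lambda>x. (norm (grad v x))\<^sup>2)"
proof -
  obtain R where R: "R > 0" "\<Omega> \<subseteq> ball 0 R" using bounded_subset_ballD[OF bdd] by blast
  have Om: "\<Omega> \<in> sets lebesgue" using lmeasurable_open[OF bdd op] by (simp add: fmeasurableD)
  obtain k :: 'n where True by blast
  show ?thesis
  proof (intro exI[of _ "4 * R^2"] conjI allI impI)
    show "4 * R^2 > 0" using R by simp
    fix v :: "real^'n \<Rightarrow> real" assume Cv: "Ck 1 v" and zv: "\<forall>x\<in>frontier \<Omega>. v x = 0"
    define g where "g y = v y * v y * y $ k" for y :: "real^'n"
    have Cg: "Ck 1 g" unfolding g_def[abs_def] by (intro C1_mult Cv C1_coord)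
    have ib: "pderiv_i k g integrable_on \<Omega> \<and> integral \<Omega> (pderiv_i k g) = 0"
      by (rule ibp0[OF bdd op negF Cg]) (use zv in \<open>simp add: g_def\<close>)
    have dv: "v differentiable (at x)" for x using C1_diffb[OF Cv] .
    have pg: "pderiv_i k g x = 2 * v x * pderiv_i k v x * x $ k + (v x)\<^sup>2" for x
    proof -
      have d1: "(\<lambda>y. v y * v y) differentiable (at x)" using dv by (intro differentiable_mult)
      have d2: "(\<lambda>y::real^'n. y $ k) differentiable (at x)" using C1_diffb[OF C1_coord] .
      have "pderiv_i k g x = pderiv_i k (\<lambda>y. v y * v y) x * x $ k + v x * v x * 1"
        unfolding g_def[abs_def] by (subst pd_mult[OF d1 d2]) (simp add: pd_coord)
      also have "pderiv_i k (\<lambda>y. v y * v y) x = pderiv_i k v x * v x + v x * pderiv_i k v x"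
        by (rule pd_mult[OF dv dv])
      finally show ?thesis by (simp add: power2_eq_square algebra_simps)
    qed
    have vI: "(\<lambda>x. (v x)\<^sup>2) integrable_on \<Omega>"
      by (rule cont_integrable(2)[OF _ bdd Om]) (intro continuous_on_power C1_cont[OF Cv])
    have gI: "(\<lambda>x. (norm (grad v x))\<^sup>2) integrable_on \<Omega>"
      by (rule cont_integrable(2)[OF C1_grad_cont[OF Cv] bdd Om])
    have pw: "(v x)\<^sup>2 \<le> pderiv_i k g x + ((v x)\<^sup>2 / 2 + 2 * R^2 * (norm (grad v x))\<^sup>2)" if x: "x \<in> \<Omega>" for x
    proof -
      have xk: "(x $ k)\<^sup>2 \<le> R^2"
      proof -
        have "\<bar>x $ k\<bar> \<le> norm x" by (rule component_le_norm_cart)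
        also have "\<dots> < R" using x R(2) by (auto simp: subset_iff)
        finally show ?thesis using abs_le_square_iff[of "x $ k" R] R(1) by (simp add: power2_eq_square)
      qed
      have gk: "(pderiv_i k v x)\<^sup>2 \<le> (norm (grad v x))\<^sup>2"
        using component_le_norm_cart[of "grad v x" k] abs_le_square_iff[of "pderiv_i k v x" "norm (grad v x)"]
        by (simp add: grad_comp)
      have amgm: "- 2 * v x * pderiv_i k v x * x $ k \<le> (v x)\<^sup>2 / 2 + 2 * (x $ k)\<^sup>2 * (pderiv_i k v x)\<^sup>2"
      proof -
        have "0 \<le> (v x / 2 + x $ k * pderiv_i k v x)\<^sup>2" by simp
        then show ?thesis by (simp add: power2_eq_square algebra_simps)
      qed
      have "2 * (x $ k)\<^sup>2 * (pderiv_i k v x)\<^sup>2 \<le> 2 * R^2 * (norm (grad v x))\<^sup>2"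
        using xk gk by (intro mult_left_mono mult_mono) auto
      then show ?thesis using pg[of x] amgm by simp
    qed
    have "integral \<Omega> (\<lambda>x. (v x)\<^sup>2) \<le> integral \<Omega> (\<lambda>x. pderiv_i k g x + ((v x)\<^sup>2 / 2 + 2 * R^2 * (norm (grad v x))\<^sup>2))"
      by (rule integral_le[OF vI _ pw]) (intro integrable_add ib[THEN conjunct1] integrable_on_divide vI integrable_on_mult_right gI)
    also have "\<dots> = 0 + (integral \<Omega> (\<lambda>x. (v x)\<^sup>2) / 2 + 2 * R^2 * integral \<Omega> (\<lambda>x. (norm (grad v x))\<^sup>2))"
      using ib vI gI
      by (simp add: integral_add integrable_add integrable_on_divide integrable_on_mult_right integral_divide integral_mult_right)
    finally show "integral \<Omega> (\<lambda>x. (v x)\<^sup>2) \<le> 4 * R^2 * integral \<Omega> (\<lambda>x. (norm (grad v x))\<^sup>2)"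
      by simp
  qed
qed

lemma ellipticity:
  fixes \<Omega> :: "(real^'n::finite) set" and \<gamma> :: "real^'n \<Rightarrow> real^'n^'n"
  assumes bdd: "bounded \<Omega>" and ne: "\<Omega> \<noteq> {}" and gs: "smooth_matrix \<gamma>"
    and spd: "\<forall>x\<in>closure \<Omega>. sym_pos_def (\<gamma> x)"
  shows "\<exists>l>0. \<forall>x\<in>closure \<Omega>. \<forall>\<xi>. l * (norm \<xi>)\<^sup>2 \<le> Bf (\<gamma> x) \<xi> \<xi>"
proof -
  define K where "K = closure \<Omega> \<times> sphere (0::real^'n) 1"
  have cK: "compact K" unfolding K_def using bdd by (intro compact_Times) auto
  obtain k :: 'n where True by blast
  have "(axis k 1 :: real^'n) \<in> sphere 0 1" by simp
  then have neK: "K \<noteq> {}" using ne unfolding K_def by (auto dest: closure_subset[THEN subsetD])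
  have cg: "continuous_on UNIV (\<lambda>x. \<gamma> x $ i $ j)" for i j
    using gs by (auto simp: smooth_matrix_def intro: C1_cont smooth_C1)
  have eqf: "(\<lambda>p. Bf (\<gamma> (fst p)) (snd p) (snd p)) = (\<lambda>p::(real^'n)\<times>(real^'n). \<Sum>i\<in>UNIV. (\<Sum>j\<in>UNIV. \<gamma> (fst p) $ i $ j * snd p $ j) * snd p $ i)"
    by (simp add: Bf_def inner_vec_def mv_comp mult.commute)
  have "continuous_on K (\<lambda>p. Bf (\<gamma> (fst p)) (snd p) (snd p))"
    unfolding eqf
    by (intro continuous_on_sum continuous_on_mult continuous_on_compose2[OF cg continuous_on_fst]
        continuous_on_compose2[OF continuous_on_id continuous_on_snd] continuous_intros) auto
  from continuous_attains_inf[OF cK neK this] obtain p0 where p0: "p0 \<in> K"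
    "\<forall>p\<in>K. Bf (\<gamma> (fst p0)) (snd p0) (snd p0) \<le> Bf (\<gamma> (fst p)) (snd p) (snd p)" by blast
  define l where "l = Bf (\<gamma> (fst p0)) (snd p0) (snd p0)"
  have lpos: "l > 0"
  proof -
    have "fst p0 \<in> closure \<Omega>" "snd p0 \<noteq> 0" using p0(1) by (auto simp: K_def)
    then show ?thesis using spd by (auto simp: l_def sym_pos_def_def Bf_def)
  qed
  show ?thesis
  proof (intro exI[of _ l] conjI ballI allI)
    show "l > 0" by (rule lpos)
    fix x \<xi> assume x: "x \<in> closure \<Omega>"
    show "l * (norm \<xi>)\<^sup>2 \<le> Bf (\<gamma> x) \<xi> \<xi>"
    proof (cases "\<xi> = 0")
      case True then show ?thesis by (simp add: Bf_def)
    next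
      case False
      define u where "u = (1 / norm \<xi>) *\<^sub>R \<xi>"
      have "(x, u) \<in> K" using x False by (simp add: K_def u_def)
      then have "l \<le> Bf (\<gamma> x) u u" using p0(2) by (auto simp: l_def)
      then have "(norm \<xi>)\<^sup>2 * l \<le> (norm \<xi>)\<^sup>2 * Bf (\<gamma> x) u u" by (simp add: mult_left_mono)
      also have "(norm \<xi>)\<^sup>2 * Bf (\<gamma> x) u u = Bf (\<gamma> x) \<xi> \<xi>"
        using False by (simp add: u_def Bf_scale1 Bf_scale2 power2_eq_square)
      finally show ?thesis by (simp add: mult.commute)
    qed
  qed
qed

lemma combine:
  fixes s v bgv Bq Dp :: real and bj pj aj D :: "nat \<Rightarrow> real"
  assumes s: "s > 0" and T0: "2 * pj 0 + Dp * aj 0 = 0"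
    and TS: "\<forall>j<N. 2 * pj (Suc j) + Dp * aj (Suc j) = - D j"
  shows "bgv + (\<Sum>j\<le>N. bj j / s^j) - s * v * (\<Sum>j\<le>N. pj j / s^j) + s * (\<Sum>j\<le>N. aj j / s^j) * Bq
        - (\<Sum>j\<le>N. (bj j + v * D j) / s^j) - (\<Sum>j\<le>N. s * (aj j * Bq + v * (pj j + aj j * Dp)) / s^j)
        = bgv - v * (D N / s^N)"
proof -
  define T where "T j = 2 * pj j + Dp * aj j" for j
  have "bgv + (\<Sum>j\<le>N. bj j / s^j) - s * v * (\<Sum>j\<le>N. pj j / s^j) + s * (\<Sum>j\<le>N. aj j / s^j) * Bq
        - (\<Sum>j\<le>N. (bj j + v * D j) / s^j) - (\<Sum>j\<le>N. s * (aj j * Bq + v * (pj j + aj j * Dp)) / s^j)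
      = bgv + (\<Sum>j\<le>N. bj j / s^j - s * v * (pj j / s^j) + s * (aj j / s^j) * Bq
        - (bj j + v * D j) / s^j - s * (aj j * Bq + v * (pj j + aj j * Dp)) / s^j)"
    by (simp add: sum.distrib sum_subtractf sum_distrib_left sum_distrib_right)
  also have "(\<Sum>j\<le>N. bj j / s^j - s * v * (pj j / s^j) + s * (aj j / s^j) * Bq
        - (bj j + v * D j) / s^j - s * (aj j * Bq + v * (pj j + aj j * Dp)) / s^j)
      = (\<Sum>j\<le>N. - v * ((D j + s * T j) / s^j))"
    by (rule sum.cong) (use s in \<open>auto simp: T_def field_simps\<close>)
  also have "\<dots> = - v * (\<Sum>j\<le>N. (D j + s * T j) / s^j)" by (simp add: sum_distrib_left)
  also have "(\<Sum>j\<le>N. (D j + s * T j) / s^j) = D N / s^N"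
    by (rule telescope[OF s]) (use T0 TS in \<open>auto simp: T_def\<close>)
  finally show ?thesis by simp
qed

lemma C1_field:
  fixes \<gamma> :: "real^'n::finite \<Rightarrow> real^'n^'n"
  assumes "smooth_matrix \<gamma>" "smooth_Rn f"
  shows "Ck 1 (\<lambda>y. (\<gamma> y *v grad f y) $ i)"
proof -
  have e: "(\<lambda>y. (\<gamma> y *v grad f y) $ i) = (\<lambda>y. \<Sum>k\<in>UNIV. \<gamma> y $ i $ k * pderiv_i k f y)"
    by (simp add: mv_comp grad_comp)
  show ?thesis unfolding e
    using assms by (intro C1_sum C1_mult smooth_C1 smooth_C1_pd) (auto simp: smooth_matrix_def)
qed

lemma sum_field: "(\<Sum>i\<in>UNIV. (M *v g) $ i * h $ i + c * d i) = Bf M g h + c * (\<Sum>i\<in>UNIV. d i)"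
  by (simp add: sum.distrib Bf_def inner_vec_def sum_distrib_left)

lemma sum_field3: "(\<Sum>i\<in>UNIV. c * (M *v g) $ i * h $ i + v * (k $ i * (M *v g) $ i + c * d i))
   = c * Bf M g h + v * (Bf M g k + c * (\<Sum>i\<in>UNIV. d i))"
  by (simp add: sum.distrib Bf_def inner_vec_def sum_distrib_left algebra_simps)

lemma energy_identity:
  fixes \<Omega> :: "(real^'n::finite) set" and a \<phi> :: "real^'n \<Rightarrow> real"
    and \<gamma> :: "real^'n \<Rightarrow> real^'n^'n" and aa :: "nat \<Rightarrow> real^'n \<Rightarrow> real"
    and w :: "real^'n \<Rightarrow> real" and \<tau> :: real
  assumes bdd: "bounded \<Omega>" and op: "open \<Omega>" and negF: "negligible (frontier \<Omega>)"
    and gs: "smooth_matrix \<gamma>" and gsym: "\<forall>x\<in>\<Omega>. transpose (\<gamma> x) = \<gamma> x"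
    and ps: "smooth_Rn \<phi>" and eik: "\<forall>x\<in>\<Omega>. Bf (\<gamma> x) (grad \<phi> x) (grad \<phi> x) = a x"
    and as: "\<forall>j\<le>N. smooth_Rn (aa j)"
    and T0: "\<forall>x\<in>\<Omega>. 2 * Bf (\<gamma> x) (grad \<phi> x) (grad (aa 0) x)
          + divg (\<lambda>y. \<gamma> y *v grad \<phi> y) x * aa 0 x = 0"
    and TS: "\<forall>j<N. \<forall>x\<in>\<Omega>. 2 * Bf (\<gamma> x) (grad \<phi> x) (grad (aa (Suc j)) x)
          + divg (\<lambda>y. \<gamma> y *v grad \<phi> y) x * aa (Suc j) x
          = - divg (\<lambda>y. \<gamma> y *v grad (aa j) y) x"
    and tau: "\<tau> > 0" and ws: "smooth_Rn w"
    and pde: "\<forall>x\<in>\<Omega>. divg (\<lambda>y. \<gamma> y *v grad w y) x - \<tau> * a x * w x = 0"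
    and bc: "\<forall>x\<in>frontier \<Omega>. w x = exp (sqrt \<tau> * \<phi> x) * (\<Sum>j\<le>N. aa j x / sqrt \<tau> ^ j)"
  defines "v \<equiv> \<lambda>x. exp (- sqrt \<tau> * \<phi> x) * w x - (\<Sum>j\<le>N. aa j x / sqrt \<tau> ^ j)"
  shows "Ck 1 v" "\<forall>x\<in>frontier \<Omega>. v x = 0"
    "((\<lambda>x. Bf (\<gamma> x) (grad v x) (grad v x)
        - v x * (divg (\<lambda>y. \<gamma> y *v grad (aa N) y) x / sqrt \<tau> ^ N)) has_integral 0) \<Omega>"
proof -
  define s where "s = sqrt \<tau>"
  have s: "s > 0" using tau by (simp add: s_def)
  have s2: "s^2 = \<tau>" using tau by (simp add: s_def)
  define ei where "ei y = exp (- s * \<phi> y)" for y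
  define A where "A y = (\<Sum>j\<le>N. aa j y / s ^ j)" for y
  have vdef: "v = (\<lambda>y. ei y * w y - A y)" by (simp add: v_def ei_def A_def s_def)
  define \<psi> where "\<psi> y = ei y * v y" for y
  have C\<phi>: "Ck 1 \<phi>" by (rule smooth_C1[OF ps])
  have Cw: "Ck 1 w" by (rule smooth_C1[OF ws])
  have Ca: "j \<le> N \<Longrightarrow> Ck 1 (aa j)" for j using as smooth_C1 by blast
  have Cei: "Ck 1 ei" unfolding ei_def[abs_def] by (intro C1_exp C1_mult C1_const C\<phi>)
  have CA: "Ck 1 A" unfolding A_def[abs_def] by (intro C1_sum C1_divc Ca) auto
  show Cv: "Ck 1 v" unfolding vdef by (intro C1_diff C1_mult Cei Cw CA)
  have C\<psi>: "Ck 1 \<psi>" unfolding \<psi>_def[abs_def] by (intro C1_mult Cei Cv)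
  show zv: "\<forall>x\<in>frontier \<Omega>. v x = 0"
  proof
    fix x assume "x \<in> frontier \<Omega>"
    then have "w x = exp (s * \<phi> x) * A x" using bc by (simp add: A_def s_def)
    moreover have "exp (- s * \<phi> x) * exp (s * \<phi> x) = 1" by (simp add: exp_minus field_simps)
    ultimately show "v x = 0" unfolding vdef ei_def by (simp add: mult.assoc[symmetric])
  qed
  have z\<psi>: "\<forall>x\<in>frontier \<Omega>. \<psi> x = 0" using zv by (simp add: \<psi>_def)
  define Fw where "Fw i y = (\<gamma> y *v grad w y) $ i" for i y
  define Fa where "Fa j i y = (\<gamma> y *v grad (aa j) y) $ i" for j i y
  define Fp where "Fp i y = (\<gamma> y *v grad \<phi> y) $ i" for i y
  define Fpa where "Fpa j i y = aa j y * Fp i y" for j i y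
  have CFw: "Ck 1 (Fw i)" for i unfolding Fw_def[abs_def] by (rule C1_field[OF gs ws])
  have CFa: "j \<le> N \<Longrightarrow> Ck 1 (Fa j i)" for i j unfolding Fa_def[abs_def] using C1_field[OF gs] as by blast
  have CFp: "Ck 1 (Fp i)" for i unfolding Fp_def[abs_def] by (rule C1_field[OF gs ps])
  have CFpa: "j \<le> N \<Longrightarrow> Ck 1 (Fpa j i)" for i j unfolding Fpa_def[abs_def] by (intro C1_mult Ca CFp)
  define I1 where "I1 x = (\<Sum>i\<in>UNIV. Fw i x * pderiv_i i \<psi> x + \<psi> x * pderiv_i i (Fw i) x)" for x
  define I2 where "I2 j x = (\<Sum>i\<in>UNIV. Fa j i x * pderiv_i i v x + v x * pderiv_i i (Fa j i) x)" for j x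
  define I3 where "I3 j x = (\<Sum>i\<in>UNIV. Fpa j i x * pderiv_i i v x + v x * pderiv_i i (Fpa j i) x)" for j x
  have H1: "(I1 has_integral 0) \<Omega>" unfolding I1_def[abs_def] by (rule ibpF[OF bdd op negF C\<psi> z\<psi> CFw])
  have H2: "((\<lambda>x. I2 j x / s^j) has_integral 0) \<Omega>" if "j \<in> {..N}" for j
  proof -
    have "\<And>i. Ck 1 (Fa j i)" using CFa that by simp
    from has_integral_divide[OF ibpF[OF bdd op negF Cv zv this], where c="s^j"]
    show ?thesis unfolding I2_def by simp
  qed
  have H3: "((\<lambda>x. s * I3 j x / s^j) has_integral 0) \<Omega>" if "j \<in> {..N}" for j
  proof -
    have "\<And>i. Ck 1 (Fpa j i)" using CFpa that by simp
    from has_integral_divide[OF has_integral_mult_right[OF ibpF[OF bdd op negF Cv zv this], where c=s], where c="s^j"]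
    show ?thesis unfolding I3_def by simp
  qed
  have Hall: "((\<lambda>x. I1 x - (\<Sum>j\<le>N. I2 j x / s^j) - (\<Sum>j\<le>N. s * I3 j x / s^j)) has_integral 0) \<Omega>"
    using has_integral_diff[OF has_integral_diff[OF H1 has_integral_sum[OF finite_atMost H2]]
        has_integral_sum[OF finite_atMost H3]] by simp
  show "((\<lambda>x. Bf (\<gamma> x) (grad v x) (grad v x)
        - v x * (divg (\<lambda>y. \<gamma> y *v grad (aa N) y) x / sqrt \<tau> ^ N)) has_integral 0) \<Omega>"
  proof (rule has_integral_eq[OF _ Hall])
    fix x assume x: "x \<in> \<Omega>"
    show "I1 x - (\<Sum>j\<le>N. I2 j x / s^j) - (\<Sum>j\<le>N. s * I3 j x / s^j) =
          Bf (\<gamma> x) (grad v x) (grad v x) - v x * (divg (\<lambda>y. \<gamma> y *v grad (aa N) y) x / sqrt \<tau> ^ N)"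
    proof -
    let ?M = "\<gamma> x" and ?gp = "grad \<phi> x" and ?gw = "grad w x" and ?gv = "grad v x"
      and ?gpsi = "grad \<psi> x" and ?E = "exp (s * \<phi> x)"
      and ?gA = "\<Sum>j\<le>N. (1 / s^j) *\<^sub>R grad (aa j) x"
      and ?Dp = "divg (\<lambda>y. \<gamma> y *v grad \<phi> y) x"
    have dphi: "\<phi> differentiable (at x)" using C1_diffb[OF C\<phi>] .
    have dw: "w differentiable (at x)" using C1_diffb[OF Cw] .
    have dei_d: "ei differentiable (at x)" using C1_diffb[OF Cei] .
    have dv_d: "v differentiable (at x)" using C1_diffb[OF Cv] .
    have dA_d: "A differentiable (at x)" using C1_diffb[OF CA] .
    have daj: "j \<le> N \<Longrightarrow> aa j differentiable (at x)" for j using C1_diffb[OF Ca] .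
    have Epos: "?E > 0" by simp
    have eiE: "ei x = 1 / ?E" by (simp add: ei_def exp_minus field_simps)
    have dei: "pderiv_i k ei x = ei x * (- s * pderiv_i k \<phi> x)" for k
    proof -
      have "(\<lambda>y. - s * \<phi> y) differentiable (at x)" using dphi by (intro differentiable_mult) auto
      then have "pderiv_i k ei x = ei x * pderiv_i k (\<lambda>y. - s * \<phi> y) x"
        unfolding ei_def[abs_def] by (rule pd_exp)
      also have "pderiv_i k (\<lambda>y. - s * \<phi> y) x = - s * pderiv_i k \<phi> x" by (rule pd_cmult[OF dphi])
      finally show ?thesis .
    qed
    have dA: "pderiv_i k A x = (\<Sum>j\<le>N. pderiv_i k (aa j) x / s^j)" for k
    proof -
      have "pderiv_i k A x = (\<Sum>j\<le>N. pderiv_i k (\<lambda>y. aa j y / s^j) x)"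
        unfolding A_def[abs_def] by (rule pd_sum) (use s in \<open>auto intro!: differentiable_divide daj\<close>)
      also have "\<dots> = (\<Sum>j\<le>N. pderiv_i k (aa j) x / s^j)"
        by (rule sum.cong) (auto simp: pd_divc daj)
      finally show ?thesis .
    qed
    have dv: "pderiv_i k v x = pderiv_i k ei x * w x + ei x * pderiv_i k w x - pderiv_i k A x" for k
    proof -
      have "(\<lambda>y. ei y * w y) differentiable (at x)" using dei_d dw by (rule differentiable_mult)
      then have "pderiv_i k v x = pderiv_i k (\<lambda>y. ei y * w y) x - pderiv_i k A x"
        unfolding vdef by (rule pd_diff[OF _ dA_d])
      then show ?thesis using pd_mult[OF dei_d dw] by simp
    qed
    have gv_eq: "?gv = ei x *\<^sub>R (?gw - (s * w x) *\<^sub>R ?gp) - ?gA"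
      by (simp add: vec_eq_iff grad_comp dv dei dA algebra_simps)
    have gpsi_eq: "?gpsi = ei x *\<^sub>R (?gv - (s * v x) *\<^sub>R ?gp)"
    proof -
      have "pderiv_i k \<psi> x = pderiv_i k ei x * v x + ei x * pderiv_i k v x" for k
        unfolding \<psi>_def[abs_def] by (rule pd_mult[OF dei_d dv_d])
      then show ?thesis by (simp add: vec_eq_iff grad_comp dei algebra_simps)
    qed
    have I1v: "I1 x = Bf ?M ?gw ?gpsi + \<psi> x * (s^2 * a x * w x)"
    proof -
      have "I1 x = (\<Sum>i\<in>UNIV. (?M *v ?gw) $ i * ?gpsi $ i + \<psi> x * pderiv_i i (Fw i) x)"
        by (simp add: I1_def Fw_def grad_comp)
      also have "\<dots> = Bf ?M ?gw ?gpsi + \<psi> x * (\<Sum>i\<in>UNIV. pderiv_i i (Fw i) x)" by (rule sum_field)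
      also have "(\<Sum>i\<in>UNIV. pderiv_i i (Fw i) x) = divg (\<lambda>y. \<gamma> y *v grad w y) x"
        by (simp add: divg_def Fw_def[abs_def])
      also have "\<dots> = s^2 * a x * w x" using pde x s2 by simp
      finally show ?thesis .
    qed
    have I2v: "I2 j x = Bf ?M (grad (aa j) x) ?gv + v x * divg (\<lambda>y. \<gamma> y *v grad (aa j) y) x" for j
    proof -
      have "I2 j x = (\<Sum>i\<in>UNIV. (?M *v grad (aa j) x) $ i * ?gv $ i + v x * pderiv_i i (Fa j i) x)"
        by (simp add: I2_def Fa_def grad_comp)
      also have "\<dots> = Bf ?M (grad (aa j) x) ?gv + v x * (\<Sum>i\<in>UNIV. pderiv_i i (Fa j i) x)" by (rule sum_field)
      also have "(\<Sum>i\<in>UNIV. pderiv_i i (Fa j i) x) = divg (\<lambda>y. \<gamma> y *v grad (aa j) y) x"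
        by (simp add: divg_def Fa_def[abs_def])
      finally show ?thesis .
    qed
    have I3v: "I3 j x = aa j x * Bf ?M ?gp ?gv + v x * (Bf ?M ?gp (grad (aa j) x) + aa j x * ?Dp)" if j: "j \<le> N" for j
    proof -
      have pfpa: "pderiv_i i (Fpa j i) x = pderiv_i i (aa j) x * Fp i x + aa j x * pderiv_i i (Fp i) x" for i
        unfolding Fpa_def[abs_def] by (rule pd_mult[OF daj[OF j] C1_diffb[OF CFp]])
      have "I3 j x = (\<Sum>i\<in>UNIV. aa j x * (?M *v ?gp) $ i * ?gv $ i
                + v x * (grad (aa j) x $ i * (?M *v ?gp) $ i + aa j x * pderiv_i i (Fp i) x))"
        by (simp add: I3_def Fpa_def pfpa Fp_def grad_comp)
      also have "\<dots> = aa j x * Bf ?M ?gp ?gv + v x * (Bf ?M ?gp (grad (aa j) x) + aa j x * (\<Sum>i\<in>UNIV. pderiv_i i (Fp i) x))"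
        by (rule sum_field3)
      also have "(\<Sum>i\<in>UNIV. pderiv_i i (Fp i) x) = ?Dp"
        by (simp add: divg_def Fp_def[abs_def])
      finally show ?thesis .
    qed
    have hw: "w x = ?E * (v x + A x)" using eiE by (simp add: vdef field_simps)
    have hgw: "?gw = ?E *\<^sub>R (?gv + ?gA) + (s * w x) *\<^sub>R ?gp"
    proof -
      have "?gv + ?gA = ei x *\<^sub>R (?gw - (s * w x) *\<^sub>R ?gp)" using gv_eq by simp
      then have "?E *\<^sub>R (?gv + ?gA) = (?E * ei x) *\<^sub>R (?gw - (s * w x) *\<^sub>R ?gp)" by simp
      also have "?E * ei x = 1" using eiE by simp
      finally show ?thesis by simp
    qed
    have hgpsi: "?gpsi = (1 / ?E) *\<^sub>R (?gv - (s * v x) *\<^sub>R ?gp)" using gpsi_eq eiE by simp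
    have hpsi: "\<psi> x = v x / ?E" using eiE by (simp add: \<psi>_def)
    have key: "Bf ?M ?gw ?gpsi + \<psi> x * (s^2 * a x * w x)
       = Bf ?M ?gv ?gv + Bf ?M ?gA ?gv - s * v x * Bf ?M ?gp ?gA + s * A x * Bf ?M ?gp ?gv"
      by (rule key_alg[OF _ Epos hw hgw hgpsi hpsi]) (use gsym eik x in auto)
    have eA1: "Bf ?M ?gA ?gv = (\<Sum>j\<le>N. Bf ?M (grad (aa j) x) ?gv / s^j)"
      by (simp add: Bf_sum1 Bf_scale1)
    have eA2: "Bf ?M ?gp ?gA = (\<Sum>j\<le>N. Bf ?M ?gp (grad (aa j) x) / s^j)"
      by (simp add: Bf_sum2 Bf_scale2)
    have eS2: "(\<Sum>j\<le>N. I2 j x / s^j) = (\<Sum>j\<le>N. (Bf ?M (grad (aa j) x) ?gv + v x * divg (\<lambda>y. \<gamma> y *v grad (aa j) y) x) / s^j)"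
      by (simp add: I2v)
    have eS3: "(\<Sum>j\<le>N. s * I3 j x / s^j) = (\<Sum>j\<le>N. s * (aa j x * Bf ?M ?gp ?gv + v x * (Bf ?M ?gp (grad (aa j) x) + aa j x * ?Dp)) / s^j)"
      by (rule sum.cong) (auto simp: I3v)
    have comb: "Bf ?M ?gv ?gv + (\<Sum>j\<le>N. Bf ?M (grad (aa j) x) ?gv / s^j)
        - s * v x * (\<Sum>j\<le>N. Bf ?M ?gp (grad (aa j) x) / s^j) + s * (\<Sum>j\<le>N. aa j x / s^j) * Bf ?M ?gp ?gv
        - (\<Sum>j\<le>N. (Bf ?M (grad (aa j) x) ?gv + v x * divg (\<lambda>y. \<gamma> y *v grad (aa j) y) x) / s^j)
        - (\<Sum>j\<le>N. s * (aa j x * Bf ?M ?gp ?gv + v x * (Bf ?M ?gp (grad (aa j) x) + aa j x * ?Dp)) / s^j)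
        = Bf ?M ?gv ?gv - v x * (divg (\<lambda>y. \<gamma> y *v grad (aa N) y) x / s^N)"
      by (rule combine[OF s]) (use T0 TS x in \<open>auto simp: mult.commute\<close>)
    show ?thesis
      using I1v key eA1 eA2 eS2 eS3 comb by (simp add: A_def s_def)
    qed
  qed
qed

lemma Bf_cont:
  assumes gs: "smooth_matrix \<gamma>" and Cv: "Ck 1 v"
  shows "continuous_on UNIV (\<lambda>x. Bf (\<gamma> x) (grad v x) (grad v x))"
proof -
  have cg: "continuous_on UNIV (\<lambda>x. \<gamma> x $ i $ j)" for i j
    using gs by (auto simp: smooth_matrix_def intro: C1_cont smooth_C1)
  show ?thesis unfolding Bf_grad
    by (intro continuous_on_sum continuous_on_mult cg C1_pcont[OF Cv])
qed

lemma young: "(c::real) > 0 \<Longrightarrow> v * y \<le> c * v^2 + y^2 / (4 * c)"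
proof -
  assume c: "c > 0"
  have "0 \<le> (2 * c * v - y)^2" by simp
  then have h: "(v * y) * (4 * c) \<le> 4 * c^2 * v^2 + y^2" by (simp add: power2_eq_square algebra_simps)
  have "v * y \<le> (4 * c^2 * v^2 + y^2) / (4 * c)" using h c by (simp add: pos_le_divide_eq)
  also have "(4 * c^2 * v^2 + y^2) / (4 * c) = c * v^2 + y^2 / (4 * c)"
    using c by (simp add: field_simps power2_eq_square)
  finally show ?thesis .
qed

lemma sq_sum_le: "((a::real) + b)^2 \<le> 2 * a^2 + 2 * b^2"
proof -
  have "0 \<le> (a - b)^2" by simp
  then show ?thesis by (simp add: power2_eq_square algebra_simps)
qed

lemma norm_sq_sum_le: "(norm ((x::'a::real_normed_vector) + y))^2 \<le> 2 * (norm x)^2 + 2 * (norm y)^2"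
proof -
  have "norm (x + y) \<le> norm x + norm y" by (rule norm_triangle_ineq)
  then have "(norm (x + y))^2 \<le> (norm x + norm y)^2" by (simp add: power_mono)
  also have "\<dots> \<le> 2 * (norm x)^2 + 2 * (norm y)^2" by (rule sq_sum_le)
  finally show ?thesis .
qed

theorem theorem3p3:
  fixes \<Omega> :: "(real^'n::finite) set"
    and a \<phi> :: "real^'n \<Rightarrow> real"
    and \<gamma> :: "real^'n \<Rightarrow> real^'n^'n"
    and aa :: "nat \<Rightarrow> real^'n \<Rightarrow> real"
    and N :: nat
  assumes dom: "smooth_bounded_domain \<Omega>"
    and a_smooth: "smooth_Rn a"
    and a_pos: "\<forall>x\<in>closure \<Omega>. a x > 0"
    and \<gamma>_smooth: "smooth_matrix \<gamma>"
    and \<gamma>_spd: "\<forall>x\<in>closure \<Omega>. sym_pos_def (\<gamma> x)"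
    and \<phi>_smooth: "smooth_Rn \<phi>"
    and eikonal: "\<forall>x\<in>closure \<Omega>. (\<gamma> x *v grad \<phi> x) \<bullet> grad \<phi> x = a x"
    and N_ge: "N \<ge> 1"
    and aa_smooth: "\<forall>j\<le>N. smooth_Rn (aa j)"
    and transport0: "\<forall>x\<in>closure \<Omega>.
          2 * ((\<gamma> x *v grad \<phi> x) \<bullet> grad (aa 0) x)
          + divg (\<lambda>y. \<gamma> y *v grad \<phi> y) x * aa 0 x = 0"
    and transport: "\<forall>j<N. \<forall>x\<in>closure \<Omega>.
          2 * ((\<gamma> x *v grad \<phi> x) \<bullet> grad (aa (Suc j)) x)
          + divg (\<lambda>y. \<gamma> y *v grad \<phi> y) x * aa (Suc j) x
          = - divg (\<lambda>y. \<gamma> y *v grad (aa j) y) x"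
  shows "\<exists>C T. \<forall>\<tau>::real. \<forall>w :: real^'n \<Rightarrow> real.
           \<tau> > 0 \<and> \<tau> \<ge> T \<and> smooth_Rn w
           \<and> (\<forall>x\<in>\<Omega>. divg (\<lambda>y. \<gamma> y *v grad w y) x - \<tau> * a x * w x = 0)
           \<and> (\<forall>x\<in>frontier \<Omega>. w x = exp (sqrt \<tau> * \<phi> x) * (\<Sum>j\<le>N. aa j x / sqrt \<tau> ^ j))
           \<longrightarrow> H1_norm \<Omega> (\<lambda>x. exp (- sqrt \<tau> * \<phi> x) * w x - (\<Sum>j<N. aa j x / sqrt \<tau> ^ j))
               \<le> C / sqrt \<tau> ^ N"
  proof -
  from dom have bdd: "bounded \<Omega>" and op: "open \<Omega>" and ne: "\<Omega> \<noteq> {}"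
    unfolding smooth_bounded_domain_def by auto
  have negF: "negligible (frontier \<Omega>)" by (rule frontier_negligible[OF dom])
  have Om: "\<Omega> \<in> sets lebesgue" using lmeasurable_open[OF bdd op] by (simp add: fmeasurableD)
  have sub: "\<And>x. x \<in> \<Omega> \<Longrightarrow> x \<in> closure \<Omega>" using closure_subset by blast
  obtain l where l: "l > 0" "\<forall>x\<in>closure \<Omega>. \<forall>\<xi>. l * (norm \<xi>)\<^sup>2 \<le> Bf (\<gamma> x) \<xi> \<xi>"
    using ellipticity[OF bdd ne \<gamma>_smooth \<gamma>_spd] by blast
  obtain P where P: "P > 0" "\<forall>v. Ck 1 v \<longrightarrow> (\<forall>x\<in>frontier \<Omega>. v x = 0) \<longrightarrow>
     integral \<Omega> (\<lambda>x. (v x)\<^sup>2) \<le> P * integral \<Omega> (\<lambda>x. (norm (grad v x))\<^sup>2)"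
    using poincare[OF bdd op negF] by blast
  have gsym: "\<forall>x\<in>\<Omega>. transpose (\<gamma> x) = \<gamma> x" using \<gamma>_spd sub by (auto simp: sym_pos_def_def)
  have eik': "\<forall>x\<in>\<Omega>. Bf (\<gamma> x) (grad \<phi> x) (grad \<phi> x) = a x" using eikonal sub by (auto simp: Bf_def)
  have T0': "\<forall>x\<in>\<Omega>. 2 * Bf (\<gamma> x) (grad \<phi> x) (grad (aa 0) x)
          + divg (\<lambda>y. \<gamma> y *v grad \<phi> y) x * aa 0 x = 0" using transport0 sub by (auto simp: Bf_def)
  have TS': "\<forall>j<N. \<forall>x\<in>\<Omega>. 2 * Bf (\<gamma> x) (grad \<phi> x) (grad (aa (Suc j)) x)
          + divg (\<lambda>y. \<gamma> y *v grad \<phi> y) x * aa (Suc j) x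
          = - divg (\<lambda>y. \<gamma> y *v grad (aa j) y) x" using transport sub by (auto simp: Bf_def)
  define DN where "DN x = divg (\<lambda>y. \<gamma> y *v grad (aa N) y) x" for x
  have aNs: "smooth_Rn (aa N)" using aa_smooth by simp
  have CaN: "Ck 1 (aa N)" by (rule smooth_C1[OF aNs])
  have DNc: "continuous_on UNIV DN"
  proof -
    have "DN = (\<lambda>x. \<Sum>i\<in>UNIV. pderiv_i i (\<lambda>y. (\<gamma> y *v grad (aa N) y) $ i) x)"
      by (simp add: DN_def[abs_def] divg_def)
    then show ?thesis
      by (simp only:) (intro continuous_on_sum C1_pcont[OF C1_field[OF \<gamma>_smooth aNs]])
  qed
  define KN where "KN = integral \<Omega> (\<lambda>x. (DN x)\<^sup>2)"
  define KA where "KA = integral \<Omega> (\<lambda>x. (aa N x)\<^sup>2 + (norm (grad (aa N) x))\<^sup>2)"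
  define C0 where "C0 = 2 * (P + 1) * (P * KN / l^2) + 2 * KA"
  show ?thesis
  proof (rule exI[of _ "sqrt C0"], rule exI[of _ 0], intro allI impI)
    fix \<tau> :: real and w :: "real^'n \<Rightarrow> real"
    assume H: "\<tau> > 0 \<and> \<tau> \<ge> 0 \<and> smooth_Rn w
           \<and> (\<forall>x\<in>\<Omega>. divg (\<lambda>y. \<gamma> y *v grad w y) x - \<tau> * a x * w x = 0)
           \<and> (\<forall>x\<in>frontier \<Omega>. w x = exp (sqrt \<tau> * \<phi> x) * (\<Sum>j\<le>N. aa j x / sqrt \<tau> ^ j))"
    then have tau: "\<tau> > 0" and ws: "smooth_Rn w"
      and pde: "\<forall>x\<in>\<Omega>. divg (\<lambda>y. \<gamma> y *v grad w y) x - \<tau> * a x * w x = 0"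
      and bc: "\<forall>x\<in>frontier \<Omega>. w x = exp (sqrt \<tau> * \<phi> x) * (\<Sum>j\<le>N. aa j x / sqrt \<tau> ^ j)"
      by auto
    define s where "s = sqrt \<tau>"
    have s: "s > 0" using tau by (simp add: s_def)
    have sN: "s^N > 0" using s by simp
    define v where "v = (\<lambda>x. exp (- sqrt \<tau> * \<phi> x) * w x - (\<Sum>j\<le>N. aa j x / sqrt \<tau> ^ j))"
    note EI = energy_identity[OF bdd op negF \<gamma>_smooth gsym \<phi>_smooth eik' aa_smooth T0' TS' tau ws pde bc]
    have Cv: "Ck 1 v" using EI(1) by (simp add: v_def)
    have zv: "\<forall>x\<in>frontier \<Omega>. v x = 0" using EI(2) by (simp add: v_def)
    have EI3: "((\<lambda>x. Bf (\<gamma> x) (grad v x) (grad v x) - v x * (DN x / s ^ N)) has_integral 0) \<Omega>"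
      using EI(3) by (simp add: v_def DN_def s_def)
    have intc: "\<And>f::real^'n \<Rightarrow> real. continuous_on UNIV f \<Longrightarrow> f integrable_on \<Omega>"
      using cont_integrable(2)[OF _ bdd Om] by blast
    have vc: "continuous_on UNIV v" by (rule C1_cont[OF Cv])
    have iB: "(\<lambda>x. Bf (\<gamma> x) (grad v x) (grad v x)) integrable_on \<Omega>" by (rule intc[OF Bf_cont[OF \<gamma>_smooth Cv]])
    have iG: "(\<lambda>x. (norm (grad v x))\<^sup>2) integrable_on \<Omega>" by (rule intc[OF C1_grad_cont[OF Cv]])
    have iV: "(\<lambda>x. (v x)\<^sup>2) integrable_on \<Omega>" by (rule intc) (intro continuous_intros vc)
    have iW: "(\<lambda>x. v x * (DN x / s ^ N)) integrable_on \<Omega>" by (rule intc) (use s in \<open>intro continuous_intros vc DNc, auto\<close>)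
    have iD: "(\<lambda>x. (DN x)\<^sup>2) integrable_on \<Omega>" by (rule intc) (intro continuous_intros DNc)
    define Gv where "Gv = integral \<Omega> (\<lambda>x. (norm (grad v x))\<^sup>2)"
    define Vv where "Vv = integral \<Omega> (\<lambda>x. (v x)\<^sup>2)"
    have eqBW: "integral \<Omega> (\<lambda>x. Bf (\<gamma> x) (grad v x) (grad v x)) = integral \<Omega> (\<lambda>x. v x * (DN x / s ^ N))"
      using integral_unique[OF EI3] integral_diff[OF iB iW] by simp
    have lG: "l * Gv \<le> integral \<Omega> (\<lambda>x. Bf (\<gamma> x) (grad v x) (grad v x))"
    proof -
      have "integral \<Omega> (\<lambda>x. l * (norm (grad v x))\<^sup>2) \<le> integral \<Omega> (\<lambda>x. Bf (\<gamma> x) (grad v x) (grad v x))"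
        by (rule integral_le[OF integrable_on_mult_right[OF iG] iB]) (use l sub in blast)
      then show ?thesis by (simp add: Gv_def)
    qed
    define c where "c = l / (2 * P)"
    have c: "c > 0" using l P by (simp add: c_def)
    have yW: "integral \<Omega> (\<lambda>x. v x * (DN x / s ^ N)) \<le> c * Vv + KN / (4 * c * (s^N)^2)"
    proof -
      have "integral \<Omega> (\<lambda>x. v x * (DN x / s ^ N)) \<le> integral \<Omega> (\<lambda>x. c * (v x)\<^sup>2 + (DN x)\<^sup>2 / (4 * c * (s^N)^2))"
      proof (rule integral_le[OF iW])
        show "(\<lambda>x. c * (v x)\<^sup>2 + (DN x)\<^sup>2 / (4 * c * (s^N)^2)) integrable_on \<Omega>"
          by (intro integrable_add integrable_on_mult_right iV integrable_on_divide iD)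
        fix x assume "x \<in> \<Omega>"
        have "v x * (DN x / s ^ N) \<le> c * (v x)\<^sup>2 + (DN x / s^N)\<^sup>2 / (4 * c)" by (rule young[OF c])
        also have "(DN x / s^N)\<^sup>2 / (4 * c) = (DN x)\<^sup>2 / (4 * c * (s^N)^2)" by (simp add: power_divide)
        finally show "v x * (DN x / s ^ N) \<le> c * (v x)\<^sup>2 + (DN x)\<^sup>2 / (4 * c * (s^N)^2)" .
      qed
      also have "\<dots> = c * Vv + KN / (4 * c * (s^N)^2)"
        using iV iD by (simp add: integral_add integrable_on_mult_right integrable_on_divide Vv_def KN_def)
      finally show ?thesis .
    qed
    have VP: "Vv \<le> P * Gv" using P(2) Cv zv by (simp add: Vv_def Gv_def)
    have Gb: "Gv \<le> P * KN / l^2 / (s^N)^2"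
    proof -
      have "l * Gv \<le> c * (P * Gv) + KN / (4 * c * (s^N)^2)"
        using lG eqBW yW VP c by (smt (verit) mult_left_mono)
      then have "l * Gv \<le> l / 2 * Gv + KN * P / (2 * l * (s^N)^2)"
        using P l by (simp add: c_def field_simps)
      then have Y: "l / 2 * Gv \<le> KN * P / (2 * l * (s^N)^2)" by linarith
      have "(l / 2 * Gv) / (l / 2) \<le> (KN * P / (2 * l * (s^N)^2)) / (l / 2)"
        by (rule divide_right_mono[OF Y]) (use l in simp)
      moreover have "(l / 2 * Gv) / (l / 2) = Gv" using l by simp
      moreover have "(KN * P / (2 * l * (s^N)^2)) / (l / 2) = P * KN / l^2 / (s^N)^2"
        using l sN by (simp add: field_simps power2_eq_square)
      ultimately show ?thesis by simp
    qed
    have Gnn: "Gv \<ge> 0" unfolding Gv_def by (rule integral_nonneg[OF iG]) simp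
    define u where "u = (\<lambda>x. exp (- sqrt \<tau> * \<phi> x) * w x - (\<Sum>j<N. aa j x / sqrt \<tau> ^ j))"
    have uv: "u = (\<lambda>x. v x + aa N x / s^N)"
      by (rule ext) (simp add: u_def v_def s_def lessThan_Suc_atMost[symmetric] sum.lessThan_Suc)
    have gu: "grad u x = grad v x + (1 / s^N) *\<^sub>R grad (aa N) x" for x
    proof -
      have "pderiv_i k u x = pderiv_i k v x + pderiv_i k (aa N) x / s^N" for k
        unfolding uv
        by (simp add: pd_add[OF C1_diffb[OF Cv] C1_diffb[OF C1_divc[OF CaN]]] pd_divc[OF C1_diffb[OF CaN]])
      then show ?thesis by (simp add: vec_eq_iff grad_comp)
    qed
    have iA: "(\<lambda>x. (aa N x)\<^sup>2 + (norm (grad (aa N) x))\<^sup>2) integrable_on \<Omega>"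
      by (rule intc) (intro continuous_intros C1_cont[OF CaN] C1_grad_cont[OF CaN])
    have iU: "(\<lambda>x. (u x)\<^sup>2 + (norm (grad u x))\<^sup>2) integrable_on \<Omega>"
    proof (rule intc)
      have Cu: "Ck 1 u" unfolding uv by (intro C1_add Cv C1_divc CaN)
      show "continuous_on UNIV (\<lambda>x. (u x)\<^sup>2 + (norm (grad u x))\<^sup>2)"
        by (intro continuous_intros C1_cont[OF Cu] C1_grad_cont[OF Cu])
    qed
    have pwU: "(u x)\<^sup>2 + (norm (grad u x))\<^sup>2 \<le> 2 * ((v x)\<^sup>2 + (norm (grad v x))\<^sup>2)
        + 2 / (s^N)^2 * ((aa N x)\<^sup>2 + (norm (grad (aa N) x))\<^sup>2)" for x
    proof -
      have "(u x)\<^sup>2 \<le> 2 * (v x)\<^sup>2 + 2 * (aa N x / s^N)\<^sup>2" unfolding uv by (rule sq_sum_le)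
      moreover have "(norm (grad u x))\<^sup>2 \<le> 2 * (norm (grad v x))\<^sup>2 + 2 * (norm ((1 / s^N) *\<^sub>R grad (aa N) x))\<^sup>2"
        unfolding gu by (rule norm_sq_sum_le)
      moreover have "(aa N x / s^N)\<^sup>2 = (aa N x)\<^sup>2 / (s^N)^2" by (simp add: power_divide)
      moreover have "(norm ((1 / s^N) *\<^sub>R grad (aa N) x))\<^sup>2 = (norm (grad (aa N) x))\<^sup>2 / (s^N)^2"
        using sN by (simp add: power_divide power_mult_distrib)
      moreover have "2 / (s^N)^2 * ((aa N x)\<^sup>2 + (norm (grad (aa N) x))\<^sup>2)
          = 2 * ((aa N x)\<^sup>2 / (s^N)^2) + 2 * ((norm (grad (aa N) x))\<^sup>2 / (s^N)^2)"
        by (simp add: add_divide_distrib distrib_left)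
      moreover have "2 * ((v x)\<^sup>2 + (norm (grad v x))\<^sup>2) = 2 * (v x)\<^sup>2 + 2 * (norm (grad v x))\<^sup>2"
        by (rule distrib_left)
      ultimately show ?thesis by linarith
    qed
    have intU: "integral \<Omega> (\<lambda>x. (u x)\<^sup>2 + (norm (grad u x))\<^sup>2) \<le> 2 * (Vv + Gv) + 2 / (s^N)^2 * KA"
    proof -
      have "integral \<Omega> (\<lambda>x. (u x)\<^sup>2 + (norm (grad u x))\<^sup>2) \<le> integral \<Omega> (\<lambda>x. 2 * ((v x)\<^sup>2 + (norm (grad v x))\<^sup>2)
        + 2 / (s^N)^2 * ((aa N x)\<^sup>2 + (norm (grad (aa N) x))\<^sup>2))"
        by (rule integral_le[OF iU _ pwU]) (intro integrable_add integrable_on_mult_right iV iG iA)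
      also have "\<dots> = integral \<Omega> (\<lambda>x. 2 * ((v x)\<^sup>2 + (norm (grad v x))\<^sup>2))
          + integral \<Omega> (\<lambda>x. 2 / (s^N)^2 * ((aa N x)\<^sup>2 + (norm (grad (aa N) x))\<^sup>2))"
        by (rule integral_add) (intro integrable_on_mult_right integrable_add iV iG iA)+
      also have "integral \<Omega> (\<lambda>x. 2 * ((v x)\<^sup>2 + (norm (grad v x))\<^sup>2)) = 2 * (Vv + Gv)"
        unfolding integral_mult_right Vv_def Gv_def by (simp add: integral_add[OF iV iG])
      also have "integral \<Omega> (\<lambda>x. 2 / (s^N)^2 * ((aa N x)\<^sup>2 + (norm (grad (aa N) x))\<^sup>2)) = 2 / (s^N)^2 * KA"
        unfolding integral_mult_right KA_def ..

      finally show ?thesis .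
    qed
    have "2 * (Vv + Gv) + 2 / (s^N)^2 * KA \<le> 2 * (P + 1) * Gv + 2 / (s^N)^2 * KA"
      using VP by (simp add: algebra_simps)
    also have "\<dots> \<le> 2 * (P + 1) * (P * KN / l^2 / (s^N)^2) + 2 / (s^N)^2 * KA"
    proof -
      have "2 * (P + 1) * Gv \<le> 2 * (P + 1) * (P * KN / l^2 / (s^N)^2)"
        by (rule mult_left_mono[OF Gb]) (use P in simp)
      then show ?thesis by linarith
    qed
    also have "\<dots> = C0 / (s^N)^2"
    proof -
      have "(s^N)^2 \<noteq> 0" "l^2 \<noteq> 0" using l(1) s by auto
      moreover have "s \<noteq> 0" using s by simp
      ultimately show ?thesis by (simp add: C0_def field_simps)
    qed
    finally have IU: "integral \<Omega> (\<lambda>x. (u x)\<^sup>2 + (norm (grad u x))\<^sup>2) \<le> C0 / (s^N)^2"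
      using intU by linarith
    have "H1_norm \<Omega> u = sqrt (integral \<Omega> (\<lambda>x. (u x)\<^sup>2 + (norm (grad u x))\<^sup>2))"
      by (simp add: H1_norm_def)
    also have "\<dots> \<le> sqrt (C0 / (s^N)^2)" using IU by (rule real_sqrt_le_mono)
    also have "\<dots> = sqrt C0 / s^N" using sN by (simp add: real_sqrt_divide)
    finally show "H1_norm \<Omega> (\<lambda>x. exp (- sqrt \<tau> * \<phi> x) * w x - (\<Sum>j<N. aa j x / sqrt \<tau> ^ j))
               \<le> sqrt C0 / sqrt \<tau> ^ N" by (simp add: u_def s_def)
  qed
qed

end
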